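(* Let $H$ be a separable Hilbert space, let $(X_t)_{t\geq 1}$ be an $H$-valued process and $(\epsilon_t)_{t\geq1}$ a real-valued process, and let $(\mathcal{F}_t)_{t\geq 0}$ be a filtration such that for all $t\geq 1$: $X_t$ is $\mathcal{F}_{t-1}$-measurable, $\epsilon_t$ is $\mathcal{F}_t$-measurable, and $\mathbb{E}[\epsilon_t\mid\mathcal{F}_{t-1}]=0$. Fix $\rho>0$ and set $V_t=\sum_{i\leq t}X_iX_i^T$, $M_t=\sum_{i\le t}X_i\epsilon_i$, and $G_t=(\rho I+V_t)^{-1/2}X_t$. For $\lambda>0$ let $$e_t(\lambda)=\|G_t\|^2\,\mathbb{E}\big[\exp(\lambda|\epsilon_t|)-\lambda|\epsilon_t|-1\,\big|\,\mathcal{F}_{t-1}\big].$$ Then the process $$S_t=\cosh\Big(\lambda\big\|(\rho I+V_t)^{-1/2}M_t\big\|\Big)\exp\Big(-\sum_{i\leq t}e_i(\lambda)\Big)$$ is a nonnegative supermartingale with respect to $(\mathcal{F}_t)$.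
   Context: For $f,g\in H$, $fg^T$ denotes the operator $f\langle g,\cdot\rangle$ on $H$, and $I$ is the identity operator on $H$. *)

theory Defs
  imports "HOL-Probability.Probability"
begin

definition outer_op :: "'h::real_inner \<Rightarrow> 'h \<Rightarrow> ('h \<Rightarrow> 'h)" where
  "outer_op f g = (\<lambda>v. inner g v *\<^sub>R f)"

definition op_sqrt :: "('h::real_inner \<Rightarrow> 'h) \<Rightarrow> ('h \<Rightarrow> 'h)" where
  "op_sqrt T = (THE S. bounded_linear S \<and> (\<forall>u v. inner (S u) v = inner u (S v))
                   \<and> (\<forall>u. 0 \<le> inner u (S u)) \<and> S \<circ> S = T)"

definition inv_sqrt_op :: "real \<Rightarrow> ('h::real_inner \<Rightarrow> 'h) \<Rightarrow> ('h \<Rightarrow> 'h)" where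
  "inv_sqrt_op \<rho> T = inv (op_sqrt (\<lambda>v. \<rho> *\<^sub>R v + T v))"

definition Vop :: "(nat \<Rightarrow> 'a \<Rightarrow> 'h::real_inner) \<Rightarrow> nat \<Rightarrow> 'a \<Rightarrow> ('h \<Rightarrow> 'h)" where
  "Vop X t \<omega> = (\<lambda>v. \<Sum>i\<in>{1..t}. outer_op (X i \<omega>) (X i \<omega>) v)"

definition Mvec :: "(nat \<Rightarrow> 'a \<Rightarrow> 'h::real_inner) \<Rightarrow> (nat \<Rightarrow> 'a \<Rightarrow> real) \<Rightarrow> nat \<Rightarrow> 'a \<Rightarrow> 'h" where
  "Mvec X \<epsilon> t \<omega> = (\<Sum>i\<in>{1..t}. \<epsilon> i \<omega> *\<^sub>R X i \<omega>)"

definition Gvec :: "real \<Rightarrow> (nat \<Rightarrow> 'a \<Rightarrow> 'h::real_inner) \<Rightarrow> nat \<Rightarrow> 'a \<Rightarrow> 'h" where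
  "Gvec \<rho> X t \<omega> = inv_sqrt_op \<rho> (Vop X t \<omega>) (X t \<omega>)"

definition e_term :: "'a measure \<Rightarrow> (nat \<Rightarrow> 'a measure) \<Rightarrow> real \<Rightarrow> (nat \<Rightarrow> 'a \<Rightarrow> 'h::real_inner)
    \<Rightarrow> (nat \<Rightarrow> 'a \<Rightarrow> real) \<Rightarrow> real \<Rightarrow> nat \<Rightarrow> 'a \<Rightarrow> ennreal" where
  "e_term M F \<rho> X \<epsilon> lam t \<omega> =
     ennreal ((norm (Gvec \<rho> X t \<omega>))\<^sup>2) *
     nn_cond_exp M (F (t - 1))
       (\<lambda>y. ennreal (exp (lam * \<bar>\<epsilon> t y\<bar>) - lam * \<bar>\<epsilon> t y\<bar> - 1)) \<omega>"

text \<open>S_t = cosh(lambda ||(rho I+V_t)^(-1/2) M_t||) exp(-sum_{i<=t} e_i(lambda)),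
  where exp(-\<infinity>) = 0.\<close>
definition S_proc :: "'a measure \<Rightarrow> (nat \<Rightarrow> 'a measure) \<Rightarrow> real \<Rightarrow> (nat \<Rightarrow> 'a \<Rightarrow> 'h::real_inner)
    \<Rightarrow> (nat \<Rightarrow> 'a \<Rightarrow> real) \<Rightarrow> real \<Rightarrow> nat \<Rightarrow> 'a \<Rightarrow> real" where
  "S_proc M F \<rho> X \<epsilon> lam t \<omega> =
     (let E = (\<Sum>i\<in>{1..t}. e_term M F \<rho> X \<epsilon> lam i \<omega>)
      in cosh (lam * norm (inv_sqrt_op \<rho> (Vop X t \<omega>) (Mvec X \<epsilon> t \<omega>)))
         * (if E = \<infinity> then 0 else exp (- enn2real E)))"

definition is_filtration :: "'a measure \<Rightarrow> (nat \<Rightarrow> 'a measure) \<Rightarrow> bool" where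
  "is_filtration M F \<longleftrightarrow> (\<forall>t. subalgebra M (F t)) \<and> (\<forall>s t. s \<le> t \<longrightarrow> sets (F s) \<subseteq> sets (F t))"

definition supermartingale :: "'a measure \<Rightarrow> (nat \<Rightarrow> 'a measure) \<Rightarrow> (nat \<Rightarrow> 'a \<Rightarrow> real) \<Rightarrow> bool" where
  "supermartingale M F S \<longleftrightarrow>
     (\<forall>t. S t \<in> borel_measurable (F t)) \<and> (\<forall>t. integrable M (S t)) \<and>
     (\<forall>s t. s \<le> t \<longrightarrow> (AE \<omega> in M. real_cond_exp M (F s) (S t) \<omega> \<le> S s \<omega>))"

end

theory Submission
  imports Defs "HOL-Computational_Algebra.Formal_Power_Series"
begin

lemma phi_scale:
  fixes g z :: real
  assumes g0: "0 \<le> g" and g1: "g \<le> 1" and z0: "0 \<le> z"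
  shows "exp (g*z) - g*z - 1 \<le> g\<^sup>2 * (exp z - z - 1)"
proof -
  have fin: "\<And>x::real. (\<lambda>n. if n < 2 then x^n / fact n else 0) sums (1 + x)"
  proof -
    fix x :: real
    have "(\<lambda>n. if n < 2 then x^n / fact n else 0) sums (\<Sum>n\<in>{..<2}. if n < 2 then x^n / fact n else 0)"
      by (rule sums_finite) auto
    also have "(\<Sum>n\<in>{..<2}. if n < 2 then x^n / fact n else (0::real)) = 1 + x"
      by (simp add: numeral_2_eq_2)
    finally show "(\<lambda>n. if n < 2 then x^n / fact n else 0) sums (1 + x)" .
  qed
  have ex: "\<And>x::real. (\<lambda>n. x^n / fact n) sums exp x"
  proof -
    fix x :: real
    show "(\<lambda>n. x^n / fact n) sums exp x" using exp_converges[of x] by (simp add: divide_inverse_commute)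
  qed
  have "\<And>x::real. (\<lambda>n. x^n / fact n - (if n < 2 then x^n / fact n else 0)) sums (exp x - (1 + x))"
    by (intro sums_diff ex fin)
  note aa = this
  have u: "\<And>x::real. (\<lambda>n. if n < 2 then 0 else x^n / fact n) sums (exp x - x - 1)"
  proof -
    fix x :: real
    note a = aa
    have e: "(\<lambda>n. x^n / fact n - (if n < 2 then x^n / fact n else 0)) = (\<lambda>n. if n < 2 then 0 else x^n / fact n)"
      by auto
    have "exp x - (1 + x) = exp x - x - 1" by simp
    thus "(\<lambda>n. if n < 2 then 0 else x^n / fact n) sums (exp x - x - 1)" using a[of x] unfolding e by (simp add: algebra_simps)
  qed
  have v: "(\<lambda>n. g\<^sup>2 * (if n < 2 then 0 else z^n / fact n)) sums (g\<^sup>2 * (exp z - z - 1))"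
    by (rule sums_mult[OF u])
  show ?thesis
  proof (rule sums_le[OF _ u v])
    fix n :: nat
    show "(if n < 2 then 0 else (g * z) ^ n / fact n) \<le> g\<^sup>2 * (if n < 2 then 0 else z ^ n / fact n)"
    proof (cases "n < 2")
      case False
      have "g^n \<le> g^2" using False g0 g1 by (intro power_decreasing) auto
      hence "g^n * z^n \<le> g^2 * z^n" using z0 by (intro mult_right_mono) auto
      thus ?thesis using False by (simp add: power_mult_distrib divide_right_mono)
    qed simp
  qed
qed

lemma sinh_ge_self: "0 \<le> (x::real) \<Longrightarrow> x \<le> sinh x"
  using real_le_x_sinh[of x] by (simp add: sinh_def exp_minus)

lemma cosh_shift_bound:
  fixes a s \<tau> :: real
  assumes a: "0 \<le> a" and t: "0 \<le> \<tau>" and s: "\<bar>s\<bar> = \<tau>"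
  shows "cosh (a + s) \<le> cosh a + s * sinh a + cosh a * (exp \<tau> - \<tau> - 1)"
proof -
  have cs: "cosh s = cosh \<tau>" using s by (metis cosh_real_abs)
  have st: "sinh \<tau> - \<tau> \<ge> 0" using sinh_ge_self[OF t] by simp
  have "sinh s - s \<le> sinh \<tau> - \<tau>"
  proof (cases "s \<ge> 0")
    case True thus ?thesis using s by simp
  next
    case False hence "s = - \<tau>" using s by simp
    thus ?thesis using st by simp
  qed
  moreover have sa: "0 \<le> sinh a" "sinh a \<le> cosh a" using a by (auto simp: sinh_le_cosh_real)
  ultimately have "sinh a * (sinh s - s) \<le> sinh a * (sinh \<tau> - \<tau>)"
    by (intro mult_left_mono) auto
  also have "\<dots> \<le> cosh a * (sinh \<tau> - \<tau>)" using sa st by (intro mult_right_mono) auto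
  finally have k: "sinh a * (sinh s - s) \<le> cosh a * (sinh \<tau> - \<tau>)" .
  have "cosh (a + s) = cosh a * cosh \<tau> + sinh a * sinh s" by (simp add: cosh_add cs)
  also have "\<dots> = cosh a + s * sinh a + cosh a * (cosh \<tau> - 1) + sinh a * (sinh s - s)"
    by (simp add: algebra_simps)
  also have "\<dots> \<le> cosh a + s * sinh a + cosh a * (cosh \<tau> - 1) + cosh a * (sinh \<tau> - \<tau>)"
    using k by simp
  also have "\<dots> = cosh a + s * sinh a + cosh a * (cosh \<tau> + sinh \<tau> - \<tau> - 1)"
    by (simp add: algebra_simps)
  also have "cosh \<tau> + sinh \<tau> = exp \<tau>" by (rule cosh_plus_sinh)
  finally show ?thesis by simp
qed

lemma convex_pow_nonneg: "convex_on {0::real..} (\<lambda>x. x^n)"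
proof (intro f''_ge0_imp_convex)
  show "((\<lambda>x. x ^ n) has_real_derivative of_nat n * x^(n-1)) (at x)" for x
    by (rule derivative_eq_intros | simp)+
  show "((\<lambda>x. of_nat n * x^(n-1)) has_real_derivative of_nat n * of_nat (n-1) * x^(n-2)) (at x)" for x
    by (rule derivative_eq_intros | simp add: eval_nat_numeral)+
  show "\<And>x. x \<in> {0::real..} \<Longrightarrow> 0 \<le> real n * real (n - 1) * x ^ (n - 2)"
    by (auto simp: zero_le_mult_iff)
qed auto

lemma cosh_sqrt_series:
  fixes q :: real assumes "0 \<le> q"
  shows "(\<lambda>n. if even n then q^(n div 2) / fact n else 0) sums cosh (sqrt q)"
proof -
  have "(\<lambda>n. if even n then sqrt q ^ n /\<^sub>R fact n else 0) sums cosh (sqrt q)"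
    by (rule cosh_converges)
  moreover have "(\<lambda>n. if even n then sqrt q ^ n /\<^sub>R fact n else 0) = (\<lambda>n. if even n then q^(n div 2) / fact n else 0)"
  proof
    fix n :: nat
    show "(if even n then sqrt q ^ n /\<^sub>R fact n else 0) = (if even n then q^(n div 2) / fact n else 0)"
    proof (cases "even n")
      case True
      then obtain k where k: "n = 2 * k" by auto
      have "sqrt q ^ n = q ^ k" unfolding k power_mult using assms by simp
      thus ?thesis using True k by (simp add: divide_inverse_commute)
    qed simp
  qed
  ultimately show ?thesis by simp
qed

lemma convex_cosh_sqrt: "convex_on {0::real..} (\<lambda>q. cosh (sqrt q))"
proof (rule convex_onI)
  show "convex {0::real..}" by simp
  fix t x y :: real
  assume t: "0 < t" "t < 1" and x: "x \<in> {0..}" and y: "y \<in> {0..}"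
  let ?c = "\<lambda>q n. if even n then q^(n div 2) / fact n else (0::real)"
  have z: "(1 - t) *\<^sub>R x + t *\<^sub>R y \<ge> 0" using t x y by simp
  have s1: "(\<lambda>n. ?c ((1 - t) *\<^sub>R x + t *\<^sub>R y) n) sums cosh (sqrt ((1 - t) *\<^sub>R x + t *\<^sub>R y))"
    by (rule cosh_sqrt_series[OF z])
  have s2: "(\<lambda>n. (1 - t) * ?c x n + t * ?c y n) sums ((1 - t) * cosh (sqrt x) + t * cosh (sqrt y))"
    using x y by (intro sums_add sums_mult cosh_sqrt_series) auto
  show "cosh (sqrt ((1 - t) *\<^sub>R x + t *\<^sub>R y)) \<le> (1 - t) * cosh (sqrt x) + t * cosh (sqrt y)"
  proof (rule sums_le[OF _ s1 s2])
    fix n :: nat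
    show "?c ((1 - t) *\<^sub>R x + t *\<^sub>R y) n \<le> (1 - t) * ?c x n + t * ?c y n"
    proof (cases "even n")
      case True
      have "((1 - t) *\<^sub>R x + t *\<^sub>R y) ^ (n div 2) \<le> (1 - t) * x ^ (n div 2) + t * y ^ (n div 2)"
        using convex_onD[OF convex_pow_nonneg[of "n div 2"], of t x y] t x y by simp
      hence "((1 - t) *\<^sub>R x + t *\<^sub>R y) ^ (n div 2) / fact n \<le> ((1 - t) * x ^ (n div 2) + t * y ^ (n div 2)) / fact n"
        by (intro divide_right_mono) auto
      thus ?thesis using True by (simp add: add_divide_distrib)
    qed simp
  qed
qed

lemma cosh_main:
  fixes a \<alpha> \<tau> :: real
  assumes a: "0 \<le> a" and al: "\<bar>\<alpha>\<bar> \<le> \<tau>"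
  shows "cosh (sqrt (a\<^sup>2 + 2*a*\<alpha> + \<tau>\<^sup>2)) \<le> cosh a + \<alpha> * sinh a + cosh a * (exp \<tau> - \<tau> - 1)"
proof (cases "\<tau> = 0")
  case True
  hence "\<alpha> = 0" using al by simp
  thus ?thesis using True a by simp
next
  case False
  hence tp: "\<tau> > 0" using al by linarith
  define \<theta> where "\<theta> = (\<alpha> + \<tau>) / (2*\<tau>)"
  have th: "0 \<le> \<theta>" "\<theta> \<le> 1" using al tp by (auto simp: \<theta>_def field_simps)
  define qm where "qm = (a - \<tau>)\<^sup>2"
  define qp where "qp = (a + \<tau>)\<^sup>2"
  have qeq: "a\<^sup>2 + 2*a*\<alpha> + \<tau>\<^sup>2 = (1 - \<theta>) *\<^sub>R qm + \<theta> *\<^sub>R qp"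
    using tp by (simp add: \<theta>_def qm_def qp_def field_simps power2_eq_square)
  have "cosh (sqrt ((1 - \<theta>) *\<^sub>R qm + \<theta> *\<^sub>R qp)) \<le> (1 - \<theta>) * cosh (sqrt qm) + \<theta> * cosh (sqrt qp)"
    using convex_onD[OF convex_cosh_sqrt, of \<theta> qm qp] th by (simp add: qm_def qp_def)
  also have "cosh (sqrt qm) = cosh (a + (-\<tau>))" unfolding qm_def by simp
  also have "cosh (sqrt qp) = cosh (a + \<tau>)" unfolding qp_def using a tp by simp
  also have "(1 - \<theta>) * cosh (a + (-\<tau>)) + \<theta> * cosh (a + \<tau>)
     \<le> (1 - \<theta>) * (cosh a + (-\<tau>) * sinh a + cosh a * (exp \<tau> - \<tau> - 1))
       + \<theta> * (cosh a + \<tau> * sinh a + cosh a * (exp \<tau> - \<tau> - 1))"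
    using th a tp
    by (intro add_mono mult_left_mono cosh_shift_bound) auto
  also have "\<dots> = cosh a + ((2*\<theta> - 1) * \<tau>) * sinh a + cosh a * (exp \<tau> - \<tau> - 1)"
    by (simp add: algebra_simps)
  also have "(2*\<theta> - 1) * \<tau> = \<alpha>" using tp by (simp add: \<theta>_def field_simps)
  finally show ?thesis unfolding qeq .
qed

lemma blin:
  assumes "bounded_linear f"
  shows "f (x + y) = f x + f y" "f (c *\<^sub>R x) = c *\<^sub>R f x" "f (x - y) = f x - f y" "f 0 = 0" "f (- x) = - f x"
  using bounded_linear.linear[OF assms] by (simp_all add: linear_add linear_scale linear_diff linear_0 linear_neg)

lemma summable_Cauchy_h: "summable f \<longleftrightarrow> (\<forall>e>0. \<exists>N. \<forall>m\<ge>N. \<forall>n. norm (sum f {m..<n}) < e)" (is "_ = ?rhs")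
  for f :: "nat \<Rightarrow> 'a::{real_normed_vector,complete_space}"
proof
  assume f: "summable f"
  show ?rhs
  proof clarify
    fix e :: real
    assume "0 < e"
    then obtain M where M: "\<And>m n. \<lbrakk>m\<ge>M; n\<ge>M\<rbrakk> \<Longrightarrow> norm (sum f {..<m} - sum f {..<n}) < e"
      using f by (force simp add: summable_iff_convergent Cauchy_convergent_iff [symmetric] Cauchy_iff)
    have "norm (sum f {m..<n}) < e" if "m \<ge> M" for m n
    proof (cases m n rule: linorder_class.le_cases)
      assume "m \<le> n"
      then show ?thesis
        by (metis (mono_tags, opaque_lifting) M atLeast0LessThan order_trans sum_diff_nat_ivl that zero_le)
    next
      assume "n \<le> m"
      then show ?thesis
        by (simp add: \<open>0 < e\<close>)
    qed
    then show "\<exists>N. \<forall>m\<ge>N. \<forall>n. norm (sum f {m..<n}) < e"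
      by blast
  qed
next
  assume r: ?rhs
  then show "summable f"
    unfolding summable_iff_convergent Cauchy_convergent_iff [symmetric] Cauchy_iff
  proof clarify
    fix e :: real
    assume "0 < e"
    with r obtain N where N: "\<And>m n. m \<ge> N \<Longrightarrow> norm (sum f {m..<n}) < e"
      by blast
    have "norm (sum f {..<m} - sum f {..<n}) < e" if "m\<ge>N" "n\<ge>N" for m n
    proof (cases m n rule: linorder_class.le_cases)
      assume "m \<le> n"
      then show ?thesis
        by (metis N finite_lessThan lessThan_minus_lessThan lessThan_subset_iff norm_minus_commute sum_diff \<open>m\<ge>N\<close>)
    next
      assume "n \<le> m"
      then show ?thesis
        by (metis N finite_lessThan lessThan_minus_lessThan lessThan_subset_iff sum_diff \<open>n\<ge>N\<close>)
    qed
    then show "\<exists>M. \<forall>m\<ge>M. \<forall>n\<ge>M. norm (sum f {..<m} - sum f {..<n}) < e"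
      by blast
  qed
qed

context
  fixes f :: "nat \<Rightarrow> 'a::{real_normed_vector,complete_space}"
begin

lemma summable_norm_cancel_h: "summable (\<lambda>n. norm (f n)) \<Longrightarrow> summable f"
  unfolding summable_Cauchy_h
  apply (erule all_forward imp_forward ex_forward | assumption)+
  apply (fastforce simp add: order_le_less_trans [OF norm_sum] order_le_less_trans [OF abs_ge_self])
  done

lemma summable_norm_h:
  assumes a: "summable (\<lambda>n. norm (f n))" shows "norm (suminf f) \<le> (\<Sum>n. norm (f n))"
proof (rule LIMSEQ_le[OF tendsto_norm[OF summable_LIMSEQ[OF summable_norm_cancel_h[OF a]]] summable_LIMSEQ[OF a]])
  show "\<exists>N. \<forall>n\<ge>N. norm (sum f {..<n}) \<le> (\<Sum>i<n. norm (f i))" using norm_sum by blast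
qed

lemma summable_comparison_test_h: 
  assumes fg: "\<exists>N. \<forall>n\<ge>N. norm (f n) \<le> g n" and g: "summable g"
  shows "summable f"
proof -
  obtain N where N: "\<And>n. n\<ge>N \<Longrightarrow> norm (f n) \<le> g n" 
    using assms by blast
  show ?thesis
  proof (clarsimp simp add: summable_Cauchy_h)
    fix e :: real
    assume "0 < e"
    then obtain Ng where Ng: "\<And>m n. m \<ge> Ng \<Longrightarrow> norm (sum g {m..<n}) < e" 
      using g by (fastforce simp: summable_Cauchy_h)
    with N have "norm (sum f {m..<n}) < e" if "m\<ge>max N Ng" for m n
    proof -
      have "norm (sum f {m..<n}) \<le> sum g {m..<n}"
        using N that by (force intro: sum_norm_le)
      also have "... \<le> norm (sum g {m..<n})"
        by simp
      also have "... < e"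
        using Ng that by auto
      finally show ?thesis .
    qed
    then show "\<exists>N. \<forall>m\<ge>N. \<forall>n. norm (sum f {m..<n}) < e" 
      by blast
  qed
qed
end

definition symop :: "('h::real_inner \<Rightarrow> 'h) \<Rightarrow> bool" where
  "symop P \<longleftrightarrow> (\<forall>u v. inner (P u) v = inner u (P v))"
definition posop :: "('h::real_inner \<Rightarrow> 'h) \<Rightarrow> bool" where
  "posop P \<longleftrightarrow> (\<forall>u. 0 \<le> inner u (P u))"

lemma semi_cs:
  fixes P :: "'h::real_inner \<Rightarrow> 'h"
  assumes bl: "bounded_linear P" and sy: "symop P" and po: "posop P"
  shows "(inner x (P y))\<^sup>2 \<le> inner x (P x) * inner y (P y)"
proof -
  define aA where "aA = inner x (P x)"
  define cC where "cC = inner x (P y)"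
  define dD where "dD = inner y (P y)"
  have q: "0 \<le> aA + 2*r*cC + r\<^sup>2*dD" for r
  proof -
    have "0 \<le> inner (x + r *\<^sub>R y) (P (x + r *\<^sub>R y))" using po unfolding posop_def by blast
    also have "P (x + r *\<^sub>R y) = P x + r *\<^sub>R P y" using blin[OF bl] by simp
    also have "inner (x + r *\<^sub>R y) (P x + r *\<^sub>R P y) = inner x (P x) + r * inner x (P y) + r * inner y (P x) + r * r * inner y (P y)"
      by (simp add: inner_add_left inner_add_right algebra_simps)
    also have "inner y (P x) = inner x (P y)" using sy unfolding symop_def by (metis inner_commute)
    finally show ?thesis by (simp add: aA_def cC_def dD_def power2_eq_square algebra_simps)
  qed
  have dD0: "0 \<le> dD" using po unfolding posop_def dD_def by blast
  show ?thesis
  proof (cases "dD = 0")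
    case True
    have "cC = 0"
    proof (rule ccontr)
      assume "cC \<noteq> 0"
      have "0 \<le> aA + 2*(-(aA+1)/(2*cC))*cC + (-(aA+1)/(2*cC))\<^sup>2*dD" by (rule q)
      also have "\<dots> = -1" using True \<open>cC \<noteq> 0\<close> by (simp add: field_simps)
      finally show False by simp
    qed
    thus ?thesis using True by (simp add: aA_def cC_def dD_def)
  next
    case False
    hence Dp: "dD > 0" using dD0 by simp
    have "0 \<le> aA + 2*(-cC/dD)*cC + (-cC/dD)\<^sup>2*dD" by (rule q)
    also have "\<dots> = aA - cC\<^sup>2/dD" using Dp by (simp add: field_simps power2_eq_square)
    finally have "cC\<^sup>2 / dD \<le> aA" by simp
    hence "cC\<^sup>2 \<le> aA * dD" using Dp by (simp add: field_simps)
    thus ?thesis by (simp add: aA_def cC_def dD_def)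
  qed
qed

lemma pos_zero:
  fixes P :: "'h::real_inner \<Rightarrow> 'h"
  assumes bl: "bounded_linear P" and sy: "symop P" and po: "posop P" and z: "inner x (P x) = 0"
  shows "P x = 0"
proof -
  have "(inner x (P (P x)))\<^sup>2 \<le> 0" using semi_cs[OF bl sy po, of x "P x"] z by simp
  hence "inner x (P (P x)) = 0" by simp
  moreover have "inner x (P (P x)) = inner (P x) (P x)" using sy unfolding symop_def by metis
  ultimately show ?thesis by simp
qed

lemma cauchy_double:
  fixes g :: "nat \<Rightarrow> nat \<Rightarrow> 'b::real_normed_vector"
  assumes bound: "\<And>i j. norm (g i j) \<le> \<alpha> i * \<beta> j" and a0: "\<And>i. 0 \<le> \<alpha> i" and b0: "\<And>j. 0 \<le> \<beta> j"
    and sa: "summable \<alpha>" and sb: "summable \<beta>"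
    and lim: "(\<lambda>n. \<Sum>i<n. \<Sum>j<n. g i j) \<longlonglongrightarrow> L"
  shows "(\<lambda>k. \<Sum>i\<le>k. g i (k - i)) sums L"
proof -
  let ?S1 = "\<lambda>n::nat. {..<n} \<times> {..<n}"
  let ?S2 = "\<lambda>n::nat. {(i,j). i + j < n}"
  have S1_mono: "\<And>m n. m \<le> n \<Longrightarrow> ?S1 m \<subseteq> ?S1 n" by auto
  have S2_le_S1: "\<And>n. ?S2 n \<subseteq> ?S1 n" by auto
  have S1_le_S2: "\<And>n. ?S1 (n div 2) \<subseteq> ?S2 n" by auto
  have finite_S1: "\<And>n. finite (?S1 n)" by simp
  with S2_le_S1 have finite_S2: "\<And>n. finite (?S2 n)" by (rule finite_subset)
  let ?g = "\<lambda>(i,j). g i j"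
  let ?f = "\<lambda>(i,j). \<alpha> i * \<beta> j"
  have f_nonneg: "\<And>x. 0 \<le> ?f x" using a0 b0 by (auto intro: mult_nonneg_nonneg)
  then have norm_sum_f: "\<And>A. norm (sum ?f A) = sum ?f A"
    unfolding real_norm_def
    by (simp only: abs_of_nonneg sum_nonneg [rule_format])
  have 1: "(\<lambda>n. sum ?g (?S1 n)) \<longlonglongrightarrow> L"
    using lim by (simp add: sum.cartesian_product)
  have "(\<lambda>n. (\<Sum>k<n. \<alpha> k) * (\<Sum>k<n. \<beta> k)) \<longlonglongrightarrow> (\<Sum>k. \<alpha> k) * (\<Sum>k. \<beta> k)"
    using sa sb by (intro tendsto_mult summable_LIMSEQ)
  then have "(\<lambda>n. sum ?f (?S1 n)) \<longlonglongrightarrow> (\<Sum>k. \<alpha> k) * (\<Sum>k. \<beta> k)"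
    by (simp only: sum_product sum.Sigma [rule_format] finite_lessThan)
  then have "convergent (\<lambda>n. sum ?f (?S1 n))"
    by (rule convergentI)
  then have Cauchy: "Cauchy (\<lambda>n. sum ?f (?S1 n))"
    by (rule convergent_Cauchy)
  have "Zfun (\<lambda>n. sum ?f (?S1 n - ?S2 n)) sequentially"
  proof (rule ZfunI, simp only: eventually_sequentially norm_sum_f)
    fix r :: real
    assume r: "0 < r"
    from CauchyD [OF Cauchy r] obtain N
      where "\<forall>m\<ge>N. \<forall>n\<ge>N. norm (sum ?f (?S1 m) - sum ?f (?S1 n)) < r" ..
    then have "\<And>m n. N \<le> n \<Longrightarrow> n \<le> m \<Longrightarrow> norm (sum ?f (?S1 m - ?S1 n)) < r"
      by (simp only: sum_diff finite_S1 S1_mono)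
    then have N: "\<And>m n. N \<le> n \<Longrightarrow> n \<le> m \<Longrightarrow> sum ?f (?S1 m - ?S1 n) < r"
      by (simp only: norm_sum_f)
    show "\<exists>N. \<forall>n\<ge>N. sum ?f (?S1 n - ?S2 n) < r"
    proof (intro exI allI impI)
      fix n
      assume "2 * N \<le> n"
      then have n: "N \<le> n div 2" by simp
      have "sum ?f (?S1 n - ?S2 n) \<le> sum ?f (?S1 n - ?S1 (n div 2))"
        by (intro sum_mono2 finite_Diff finite_S1 f_nonneg Diff_mono subset_refl S1_le_S2)
      also have "\<dots> < r"
        using n div_le_dividend by (rule N)
      finally show "sum ?f (?S1 n - ?S2 n) < r" .
    qed
  qed
  then have "Zfun (\<lambda>n. sum ?g (?S1 n - ?S2 n)) sequentially"
    apply (rule Zfun_le [rule_format])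
    apply (simp only: norm_sum_f)
    apply (rule order_trans [OF norm_sum sum_mono])
    apply (auto simp add: bound)
    done
  then have 2: "(\<lambda>n. sum ?g (?S1 n) - sum ?g (?S2 n)) \<longlonglongrightarrow> 0"
    unfolding tendsto_Zfun_iff diff_0_right
    by (simp only: sum_diff finite_S1 S2_le_S1)
  with 1 have "(\<lambda>n. sum ?g (?S2 n)) \<longlonglongrightarrow> L"
    by (rule Lim_transform2)
  then show ?thesis
    by (simp only: sums_def sum.triangle_reindex)
qed

definition acoef :: "nat \<Rightarrow> real" where
  "acoef n = (-1)^n * ((1/2::real) gchoose n)"

lemma acoef_Suc: "acoef (Suc k) = acoef k * ((real k - 1/2) / (real k + 1))"
proof -
  have E: "(1/2::real) * ((1/2) gchoose k) = of_nat k * ((1/2) gchoose k) + of_nat (Suc k) * ((1/2) gchoose (Suc k))"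
    by (rule gbinomial_mult_1)
  have "(real k + 1) * ((1/2::real) gchoose (Suc k)) = ((1/2) gchoose k) * (1/2 - real k)"
    using E by (simp add: algebra_simps)
  hence g: "((1/2::real) gchoose (Suc k)) = ((1/2) gchoose k) * (1/2 - real k) / (real k + 1)"
    by (simp add: field_simps)
  show ?thesis unfolding acoef_def g by (simp add: field_simps)
qed

lemma acoef_0 [simp]: "acoef 0 = 1" by (simp add: acoef_def)

lemma acoef_abs: "\<bar>acoef n\<bar> \<le> 1"
proof (induction n)
  case (Suc k)
  have "\<bar>(real k - 1/2) / (real k + 1)\<bar> \<le> 1" by (simp add: abs_le_iff field_simps)
  hence "\<bar>acoef k\<bar> * \<bar>(real k - 1/2) / (real k + 1)\<bar> \<le> 1 * 1"
    using Suc by (intro mult_mono) auto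
  thus ?case unfolding acoef_Suc by (simp add: abs_mult)
qed simp

lemma acoef_nonpos: "n \<ge> 1 \<Longrightarrow> acoef n \<le> 0"
proof (induction n)
  case (Suc k)
  show ?case
  proof (cases "k = 0")
    case True thus ?thesis by (simp add: acoef_Suc)
  next
    case False
    hence "acoef k \<le> 0" using Suc by simp
    moreover have "(real k - 1/2) / (real k + 1) \<ge> 0" using False by simp
    ultimately show ?thesis unfolding acoef_Suc by (rule mult_nonpos_nonneg)
  qed
qed simp

lemma acoef_conv: "(\<Sum>i\<le>k. acoef i * acoef (k - i)) = (if k = 0 then 1 else if k = 1 then -1 else 0)"
proof -
  have "(\<Sum>i\<le>k. acoef i * acoef (k - i)) = (-1)^k * (\<Sum>i\<le>k. ((1/2::real) gchoose i) * ((1/2) gchoose (k - i)))"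
    unfolding acoef_def sum_distrib_left
  proof (rule sum.cong)
    fix i assume "i \<in> {..k}"
    hence "(-1::real)^i * (-1)^(k-i) = (-1)^k" by (simp add: power_add[symmetric])
    thus "(-1) ^ i * ((1/2::real) gchoose i) * ((-1) ^ (k - i) * (1/2 gchoose (k - i))) =
      (-1) ^ k * ((1/2 gchoose i) * (1/2 gchoose (k - i)))" by (metis (no_types, lifting) mult.assoc mult.left_commute)
  qed simp
  also have "(\<Sum>i\<le>k. ((1/2::real) gchoose i) * ((1/2) gchoose (k - i))) = (1/2 + 1/2) gchoose k"
    using gbinomial_Vandermonde[of "1/2::real" "1/2" k] by (simp add: atMost_atLeast0)
  also have "(1/2 + 1/2 :: real) gchoose k = of_nat (1 choose k)"
    using binomial_gbinomial[of 1 k, where 'a=real] by simp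
  finally show ?thesis
    by (cases k; cases "k - 1") auto
qed

locale sqset =
  fixes T :: "'h::{real_inner,complete_space} \<Rightarrow> 'h" and \<rho> :: real
  assumes bl: "bounded_linear T" and sy: "symop T"
    and co: "\<And>u. \<rho> * (norm u)\<^sup>2 \<le> inner u (T u)" and rp: "\<rho> > 0"
begin

definition cc where "cc = onorm T + \<rho>"
definition B where "B x = x - (1/cc) *\<^sub>R T x"
definition qq where "qq = 1 - \<rho>/cc"
definition R where "R x = sqrt cc *\<^sub>R (\<Sum>n. acoef n *\<^sub>R (B ^^ n) x)"

lemma on0: "0 \<le> onorm T" using onorm_pos_le[OF bl] .
lemma cc_pos: "cc > 0" using on0 rp by (simp add: cc_def)
lemma qq0: "0 \<le> qq" using on0 rp by (simp add: qq_def cc_def field_simps)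
lemma qq1: "qq < 1" using on0 rp by (simp add: qq_def cc_def field_simps)

lemma T_up: "inner u (T u) \<le> onorm T * (norm u)\<^sup>2"
proof -
  have "inner u (T u) \<le> norm u * norm (T u)" by (rule norm_cauchy_schwarz)
  also have "\<dots> \<le> norm u * (onorm T * norm u)" by (intro mult_left_mono onorm[OF bl]) auto
  finally show ?thesis by (simp add: power2_eq_square algebra_simps)
qed

lemma B_eq: "B = (\<lambda>x. x - (1/cc) *\<^sub>R T x)" by (rule ext) (simp add: B_def)

lemma B_bl: "bounded_linear B"
proof -
  have "bounded_linear (\<lambda>x. (1/cc) *\<^sub>R T x)"
    using bounded_linear_compose[OF bounded_linear_scaleR_right[of "1/cc"] bl] by (simp add: o_def)
  hence "bounded_linear (\<lambda>x. x - (1/cc) *\<^sub>R T x)"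
    by (intro bounded_linear_sub bounded_linear_ident)
  thus ?thesis by (simp add: B_eq)
qed

lemma B_sym: "symop B"
  unfolding symop_def B_def using sy unfolding symop_def by (simp add: inner_diff_left inner_diff_right)

lemma B_inner: "inner u (B u) = (norm u)\<^sup>2 - inner u (T u) / cc"
  by (simp add: B_def inner_diff_right power2_norm_eq_inner)

lemma B_pos: "posop B"
  unfolding posop_def
proof (intro allI)
  fix u :: 'h
  have "onorm T * (norm u)\<^sup>2 \<le> cc * (norm u)\<^sup>2"
    using rp by (intro mult_right_mono) (auto simp: cc_def)
  hence "inner u (T u) \<le> cc * (norm u)\<^sup>2" using T_up[of u] by linarith
  hence "inner u (T u) / cc \<le> (norm u)\<^sup>2" using cc_pos by (simp add: field_simps)
  thus "0 \<le> inner u (B u)" unfolding B_inner by simp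
qed

lemma B_up: "inner u (B u) \<le> qq * (norm u)\<^sup>2"
proof -
  have "\<rho> * (norm u)\<^sup>2 / cc \<le> inner u (T u) / cc" using co[of u] cc_pos by (simp add: divide_right_mono)
  thus ?thesis unfolding B_inner qq_def by (simp add: algebra_simps)
qed

lemma B_norm: "norm (B u) \<le> qq * norm u"
proof -
  define N where "N = norm (B u)"
  have a: "(inner u (B (B u)))\<^sup>2 \<le> inner u (B u) * inner (B u) (B (B u))"
    by (rule semi_cs[OF B_bl B_sym B_pos])
  have i1: "inner u (B u) \<le> qq * (norm u)\<^sup>2" by (rule B_up)
  have i2: "inner (B u) (B (B u)) \<le> qq * (norm (B u))\<^sup>2" by (rule B_up)
  have p2: "0 \<le> inner (B u) (B (B u))" using B_pos unfolding posop_def by blast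
  have p1: "0 \<le> qq * (norm u)\<^sup>2" using qq0 by simp
  have m: "inner u (B u) * inner (B u) (B (B u)) \<le> (qq * (norm u)\<^sup>2) * (qq * (norm (B u))\<^sup>2)"
    by (rule mult_mono[OF i1 i2 p1 p2])
  have e0: "inner (B u) (B u) = inner u (B (B u))" using B_sym unfolding symop_def by blast
  have e: "inner u (B (B u)) = N\<^sup>2" unfolding N_def using e0 by (simp add: power2_norm_eq_inner)
  have r: "(qq * (norm u)\<^sup>2) * (qq * (norm (B u))\<^sup>2) = (qq * norm u)\<^sup>2 * N\<^sup>2"
    unfolding N_def by (simp add: power2_eq_square mult_ac)
  have b: "N\<^sup>2 * N\<^sup>2 \<le> (qq * norm u)\<^sup>2 * N\<^sup>2"
    using a m unfolding e r by (simp add: power2_eq_square[of "N\<^sup>2"])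
  show ?thesis
  proof (cases "N = 0")
    case True thus ?thesis using qq0 unfolding N_def by simp
  next
    case False
    hence "0 < N\<^sup>2" by simp
    hence "N\<^sup>2 \<le> (qq * norm u)\<^sup>2" by (rule mult_right_le_imp_le[OF b])
    hence "N \<le> qq * norm u" by (rule power2_le_imp_le) (simp add: qq0)
    thus ?thesis unfolding N_def .
  qed
qed

lemma Bn_bl: "bounded_linear (B ^^ n)"
  by (induction n) (auto intro: bounded_linear_compose[OF B_bl] simp: id_def)

lemma Bn_sym: "inner ((B ^^ n) u) v = inner u ((B ^^ n) v)"
proof (induction n arbitrary: u v)
  case (Suc n)
  have "inner ((B ^^ Suc n) u) v = inner (B ((B ^^ n) u)) v" by simp
  also have "\<dots> = inner ((B ^^ n) u) (B v)" using B_sym unfolding symop_def by blast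
  also have "\<dots> = inner u ((B ^^ n) (B v))" by (rule Suc)
  also have "(B ^^ n) (B v) = (B ^^ Suc n) v" by (simp add: funpow_swap1)
  finally show ?case .
qed simp

lemma Bn_norm: "norm ((B ^^ n) u) \<le> qq ^ n * norm u"
proof (induction n)
  case (Suc n)
  have "norm ((B ^^ Suc n) u) = norm (B ((B ^^ n) u))" by simp
  also have "\<dots> \<le> qq * norm ((B ^^ n) u)" by (rule B_norm)
  also have "\<dots> \<le> qq * (qq ^ n * norm u)" using Suc qq0 by (intro mult_left_mono) auto
  finally show ?case by simp
qed simp

lemma term_bound: "norm (acoef n *\<^sub>R (B ^^ n) u) \<le> qq ^ n * norm u"
proof -
  have "norm (acoef n *\<^sub>R (B ^^ n) u) = \<bar>acoef n\<bar> * norm ((B ^^ n) u)" by simp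
  also have "\<dots> \<le> 1 * (qq ^ n * norm u)" by (intro mult_mono acoef_abs Bn_norm) auto
  finally show ?thesis by simp
qed

lemma term_bound': "\<bar>acoef n\<bar> * norm ((B ^^ n) u) \<le> qq ^ n * norm u"
  using term_bound[of n u] by simp

lemma geo_summ: "summable (\<lambda>n. qq ^ n * c)"
  using qq0 qq1 by (intro summable_mult2 summable_geometric) auto

lemma summ_norm: "summable (\<lambda>n. norm (acoef n *\<^sub>R (B ^^ n) u))"
  by (rule summable_comparison_test_h[OF _ geo_summ[of "norm u"]]) (use term_bound' in auto)

lemma summ: "summable (\<lambda>n. acoef n *\<^sub>R (B ^^ n) u)"
  by (rule summable_norm_cancel_h[OF summ_norm])

lemma geo_sum: "(\<Sum>n. qq ^ n * c) = c / (1 - qq)"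
proof -
  have g: "summable (\<lambda>n. qq ^ n)" using qq0 qq1 by (intro summable_geometric) auto
  have "(\<Sum>n. qq ^ n * c) = (\<Sum>n. qq ^ n) * c" by (rule suminf_mult2[OF g, symmetric])
  also have "(\<Sum>n. qq ^ n) = 1 / (1 - qq)" using qq0 qq1 by (intro suminf_geometric) auto
  finally show ?thesis by simp
qed

lemma ser_norm: "norm (\<Sum>n. acoef n *\<^sub>R (B ^^ n) u) \<le> norm u / (1 - qq)"
proof -
  have "norm (\<Sum>n. acoef n *\<^sub>R (B ^^ n) u) \<le> (\<Sum>n. norm (acoef n *\<^sub>R (B ^^ n) u))"
    by (rule summable_norm_h[OF summ_norm])
  also have "\<dots> \<le> (\<Sum>n. qq ^ n * norm u)"
    by (rule suminf_le[OF term_bound summ_norm geo_summ])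
  finally show ?thesis by (simp add: geo_sum)
qed

lemma ser_add: "(\<Sum>n. acoef n *\<^sub>R (B ^^ n) (x + y)) = (\<Sum>n. acoef n *\<^sub>R (B ^^ n) x) + (\<Sum>n. acoef n *\<^sub>R (B ^^ n) y)"
proof -
  have "(\<Sum>n. acoef n *\<^sub>R (B ^^ n) (x + y)) = (\<Sum>n. acoef n *\<^sub>R (B ^^ n) x + acoef n *\<^sub>R (B ^^ n) y)"
    by (rule suminf_cong) (simp add: blin(1)[OF Bn_bl] scaleR_add_right)
  also have "\<dots> = (\<Sum>n. acoef n *\<^sub>R (B ^^ n) x) + (\<Sum>n. acoef n *\<^sub>R (B ^^ n) y)"
    by (rule suminf_add[OF summ summ, symmetric])
  finally show ?thesis .
qed

lemma ser_scale: "(\<Sum>n. acoef n *\<^sub>R (B ^^ n) (c *\<^sub>R x)) = c *\<^sub>R (\<Sum>n. acoef n *\<^sub>R (B ^^ n) x)"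
proof -
  have "(\<Sum>n. acoef n *\<^sub>R (B ^^ n) (c *\<^sub>R x)) = (\<Sum>n. c *\<^sub>R (acoef n *\<^sub>R (B ^^ n) x))"
    by (rule suminf_cong) (simp add: blin(2)[OF Bn_bl])
  also have "\<dots> = c *\<^sub>R (\<Sum>n. acoef n *\<^sub>R (B ^^ n) x)"
    by (rule suminf_scaleR_right[OF summ, symmetric])
  finally show ?thesis .
qed

lemma R_bl: "bounded_linear R"
proof (rule bounded_linear_intro)
  show "R (x + y) = R x + R y" for x y by (simp add: R_def ser_add scaleR_add_right)
  show "R (r *\<^sub>R x) = r *\<^sub>R R x" for r x by (simp add: R_def ser_scale)
  show "norm (R x) \<le> norm x * (sqrt cc / (1 - qq))" for x
  proof -
    have "norm (R x) = sqrt cc * norm (\<Sum>n. acoef n *\<^sub>R (B ^^ n) x)" using cc_pos by (simp add: R_def)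
    also have "\<dots> \<le> sqrt cc * (norm x / (1 - qq))" using cc_pos by (intro mult_left_mono ser_norm) auto
    finally show ?thesis by (simp add: ac_simps)
  qed
qed

lemma R_sym: "symop R"
  unfolding symop_def
proof (intro allI)
  fix u v
  have "inner (R u) v = sqrt cc * (\<Sum>n. inner (acoef n *\<^sub>R (B ^^ n) u) v)"
    unfolding R_def inner_scaleR_left
    by (simp add: bounded_linear.suminf[OF bounded_linear_inner_left summ])
  also have "\<dots> = sqrt cc * (\<Sum>n. inner u (acoef n *\<^sub>R (B ^^ n) v))"
    by (simp add: Bn_sym)
  also have "\<dots> = inner u (R v)"
    unfolding R_def inner_scaleR_right
    by (simp add: bounded_linear.suminf[OF bounded_linear_inner_right summ])
  finally show "inner (R u) v = inner u (R v)" .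
qed

lemma acoef_geo: "(\<Sum>n. acoef n * qq ^ n) = (1 - qq) powr (1/2)"
proof -
  have "(\<lambda>n. ((1/2::real) gchoose n) * (-qq) ^ n) sums (1 + (-qq)) powr (1/2)"
    using qq0 qq1 by (intro gen_binomial_real) auto
  moreover have "(\<lambda>n. ((1/2::real) gchoose n) * (-qq) ^ n) = (\<lambda>n. acoef n * qq ^ n)"
    by (rule ext) (simp add: acoef_def power_minus' algebra_simps power_mult_distrib)
  ultimately show ?thesis by (simp add: sums_iff)
qed

lemma acq_summ: "summable (\<lambda>n. acoef n * qq ^ n)"
proof (rule summable_comparison_test_h[OF _ geo_summ[of 1]])
  have "norm (acoef n * qq ^ n) \<le> qq ^ n * 1" for n
  proof -
    have "norm (acoef n * qq ^ n) = \<bar>acoef n\<bar> * qq ^ n" using qq0 by (simp add: abs_mult)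
    also have "\<dots> \<le> 1 * qq ^ n" using qq0 by (intro mult_right_mono acoef_abs) auto
    finally show ?thesis by simp
  qed
  thus "\<exists>N. \<forall>n\<ge>N. norm (acoef n * qq ^ n) \<le> qq ^ n * 1" by blast
qed

lemma R_pos: "posop R"
  unfolding posop_def
proof
  fix u :: 'h
  have s1: "summable (\<lambda>n. inner u (acoef n *\<^sub>R (B ^^ n) u))"
    by (rule bounded_linear.summable[OF bounded_linear_inner_right summ])
  have s2: "summable (\<lambda>n. acoef n * qq ^ n * (norm u)\<^sup>2)"
    by (rule summable_mult2[OF acq_summ])
  have "(\<Sum>n. acoef n * qq ^ n * (norm u)\<^sup>2) \<le> (\<Sum>n. inner u (acoef n *\<^sub>R (B ^^ n) u))"
  proof (rule suminf_le[OF _ s2 s1])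
    fix n
    show "acoef n * qq ^ n * (norm u)\<^sup>2 \<le> inner u (acoef n *\<^sub>R (B ^^ n) u)"
    proof (cases "n = 0")
      case True thus ?thesis by (simp add: power2_norm_eq_inner)
    next
      case False
      have "inner u ((B ^^ n) u) \<le> norm u * norm ((B ^^ n) u)" by (rule norm_cauchy_schwarz)
      also have "\<dots> \<le> norm u * (qq ^ n * norm u)" by (intro mult_left_mono Bn_norm) auto
      finally have "inner u ((B ^^ n) u) \<le> qq ^ n * (norm u)\<^sup>2" by (simp add: power2_eq_square algebra_simps)
      moreover have "acoef n \<le> 0" using False by (intro acoef_nonpos) auto
      ultimately have "acoef n * (qq ^ n * (norm u)\<^sup>2) \<le> acoef n * inner u ((B ^^ n) u)"
        by (rule mult_left_mono_neg)
      thus ?thesis by (simp add: algebra_simps)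
    qed
  qed
  moreover have "(\<Sum>n. acoef n * qq ^ n * (norm u)\<^sup>2) = (1 - qq) powr (1/2) * (norm u)\<^sup>2"
    using acoef_geo suminf_mult2[OF acq_summ, of "(norm u)\<^sup>2"] by simp
  moreover have "0 \<le> (1 - qq) powr (1/2) * (norm u)\<^sup>2" by simp
  ultimately have "0 \<le> (\<Sum>n. inner u (acoef n *\<^sub>R (B ^^ n) u))" by linarith
  moreover have "inner u (R u) = sqrt cc * (\<Sum>n. inner u (acoef n *\<^sub>R (B ^^ n) u))"
    unfolding R_def inner_scaleR_right
    by (simp add: bounded_linear.suminf[OF bounded_linear_inner_right summ])
  ultimately show "0 \<le> inner u (R u)" using cc_pos by simp
qed

lemma Bn_sum: "(B ^^ i) (\<Sum>j<n. acoef j *\<^sub>R (B ^^ j) v) = (\<Sum>j<n. acoef j *\<^sub>R (B ^^ (i + j)) v)"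
  by (simp add: linear_sum[OF bounded_linear.linear[OF Bn_bl]] blin(2)[OF Bn_bl] funpow_add)

lemma partial_geo: "(\<Sum>i<n. qq ^ i) \<le> 1 / (1 - qq)"
proof -
  have g: "summable (\<lambda>n. qq ^ n)" using qq0 qq1 by (intro summable_geometric) auto
  have "(\<Sum>i<n. qq ^ i) \<le> (\<Sum>i. qq ^ i)" by (rule sum_le_suminf[OF g]) (auto simp: qq0)
  also have "\<dots> = 1 / (1 - qq)" using qq0 qq1 by (intro suminf_geometric) auto
  finally show ?thesis .
qed

lemma partial_bound: "norm (\<Sum>i<n. acoef i *\<^sub>R (B ^^ i) w) \<le> norm w / (1 - qq)"
proof -
  have "norm (\<Sum>i<n. acoef i *\<^sub>R (B ^^ i) w) \<le> (\<Sum>i<n. norm (acoef i *\<^sub>R (B ^^ i) w))"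
    by (rule norm_sum)
  also have "\<dots> \<le> (\<Sum>i<n. qq ^ i * norm w)" by (intro sum_mono term_bound)
  also have "\<dots> = (\<Sum>i<n. qq ^ i) * norm w" by (simp add: sum_distrib_right)
  also have "\<dots> \<le> (1 / (1 - qq)) * norm w" by (intro mult_right_mono partial_geo) auto
  finally show ?thesis by simp
qed

lemma R_sq: "R (R v) = T v"
proof -
  define Y where "Y = (\<Sum>j. acoef j *\<^sub>R (B ^^ j) v)"
  define Z where "Z = (\<Sum>i. acoef i *\<^sub>R (B ^^ i) Y)"
  define y where "y n = (\<Sum>j<n. acoef j *\<^sub>R (B ^^ j) v)" for n
  have RR: "R (R v) = cc *\<^sub>R Z"
  proof -
    have Rv: "R v = sqrt cc *\<^sub>R Y" by (simp add: R_def Y_def)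
    have "R (sqrt cc *\<^sub>R Y) = sqrt cc *\<^sub>R (\<Sum>n. acoef n *\<^sub>R (B ^^ n) (sqrt cc *\<^sub>R Y))" by (rule R_def)
    hence "R (R v) = sqrt cc *\<^sub>R (sqrt cc *\<^sub>R (\<Sum>i. acoef i *\<^sub>R (B ^^ i) Y))"
      unfolding Rv ser_scale .
    also have "\<dots> = cc *\<^sub>R Z" using cc_pos by (simp add: Z_def)
    finally show ?thesis .
  qed
  define g where "g i j = (acoef i * acoef j) *\<^sub>R (B ^^ (i + j)) v" for i j
  have yY: "y \<longlonglongrightarrow> Y" unfolding y_def Y_def by (rule summable_LIMSEQ[OF summ])
  have sq: "(\<lambda>n. \<Sum>i<n. \<Sum>j<n. g i j) \<longlonglongrightarrow> Z"
  proof -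
    have eq: "(\<Sum>i<n. \<Sum>j<n. g i j) = (\<Sum>i<n. acoef i *\<^sub>R (B ^^ i) Y) + (\<Sum>i<n. acoef i *\<^sub>R (B ^^ i) (y n - Y))" for n
    proof -
      have "(\<Sum>j<n. g i j) = acoef i *\<^sub>R (B ^^ i) (y n)" for i
        unfolding g_def y_def Bn_sum by (simp add: scaleR_sum_right)
      hence "(\<Sum>i<n. \<Sum>j<n. g i j) = (\<Sum>i<n. acoef i *\<^sub>R (B ^^ i) (y n))" by simp
      also have "\<dots> = (\<Sum>i<n. acoef i *\<^sub>R (B ^^ i) Y + acoef i *\<^sub>R (B ^^ i) (y n - Y))"
        by (rule sum.cong) (simp_all add: blin(3)[OF Bn_bl] scaleR_diff_right)
      also have "\<dots> = (\<Sum>i<n. acoef i *\<^sub>R (B ^^ i) Y) + (\<Sum>i<n. acoef i *\<^sub>R (B ^^ i) (y n - Y))"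
        by (rule sum.distrib)
      finally show ?thesis .
    qed
    have l1: "(\<lambda>n. \<Sum>i<n. acoef i *\<^sub>R (B ^^ i) Y) \<longlonglongrightarrow> Z"
      unfolding Z_def by (rule summable_LIMSEQ[OF summ])
    have l2: "(\<lambda>n. \<Sum>i<n. acoef i *\<^sub>R (B ^^ i) (y n - Y)) \<longlonglongrightarrow> 0"
    proof (rule Lim_null_comparison)
      show "\<forall>\<^sub>F n in sequentially. norm (\<Sum>i<n. acoef i *\<^sub>R (B ^^ i) (y n - Y)) \<le> norm (y n - Y) / (1 - qq)"
        by (intro always_eventually allI partial_bound)
      have "(\<lambda>n. y n - Y) \<longlonglongrightarrow> 0" using yY by (rule LIM_zero)
      hence "(\<lambda>n. norm (y n - Y)) \<longlonglongrightarrow> 0" by (rule tendsto_norm_zero)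
      thus "(\<lambda>n. norm (y n - Y) / (1 - qq)) \<longlonglongrightarrow> 0" by (rule tendsto_divide_zero)
    qed
    show ?thesis unfolding eq using tendsto_add[OF l1 l2] by simp
  qed
  have cs: "(\<lambda>k. \<Sum>i\<le>k. g i (k - i)) sums Z"
  proof (rule cauchy_double[OF _ _ _ _ _ sq])
    show "norm (g i j) \<le> qq ^ i * (qq ^ j * norm v)" for i j
    proof -
      have "norm (g i j) = \<bar>acoef i\<bar> * \<bar>acoef j\<bar> * norm ((B ^^ (i + j)) v)" by (simp add: g_def abs_mult)
      also have "\<dots> \<le> 1 * 1 * (qq ^ (i + j) * norm v)"
        by (intro mult_mono acoef_abs Bn_norm) auto
      finally show ?thesis by (simp add: power_add mult_ac)
    qed
    show "0 \<le> qq ^ i" for i using qq0 by simp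
    show "0 \<le> qq ^ j * norm v" for j using qq0 by simp
    show "summable (\<lambda>i. qq ^ i)" using qq0 qq1 by (intro summable_geometric) auto
    show "summable (\<lambda>j. qq ^ j * norm v)" by (rule geo_summ)
  qed
  have gk: "(\<Sum>i\<le>k. g i (k - i)) = (if k = 0 then v else if k = 1 then - B v else 0)" for k
  proof -
    have "(\<Sum>i\<le>k. g i (k - i)) = (\<Sum>i\<le>k. (acoef i * acoef (k - i)) *\<^sub>R (B ^^ k) v)"
      by (rule sum.cong) (auto simp: g_def)
    also have "\<dots> = (\<Sum>i\<le>k. acoef i * acoef (k - i)) *\<^sub>R (B ^^ k) v" by (simp add: scaleR_sum_left)
    also have "\<dots> = (if k = 0 then v else if k = 1 then - B v else 0)" unfolding acoef_conv by auto
    finally show ?thesis .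
  qed
  have "(\<lambda>k. if k = 0 then v else if k = 1 then - B v else 0) sums (\<Sum>k\<in>{0::nat,1}. if k = 0 then v else if k = 1 then - B v else 0)"
    by (rule sums_finite) auto
  hence "(\<lambda>k. \<Sum>i\<le>k. g i (k - i)) sums (v - B v)" unfolding gk by simp
  hence "Z = v - B v" using cs sums_unique2 by blast
  hence "R (R v) = cc *\<^sub>R (v - B v)" using RR by simp
  also have "\<dots> = T v" using cc_pos by (simp add: B_def)
  finally show ?thesis .
qed

lemma R_unique:
  assumes Sbl: "bounded_linear S" and Ssy: "symop S" and Spo: "posop S" and SS: "S \<circ> S = T"
  shows "S = R"
proof
  fix v
  have ST: "S (T x) = T (S x)" for x using SS by (metis comp_apply)
  have SB: "S (B x) = B (S x)" for x by (simp add: B_def blin[OF Sbl] ST)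
  have SW: "S ((B ^^ n) x) = (B ^^ n) (S x)" for n x by (induction n) (simp_all add: SB)
  have SR: "S (R x) = R (S x)" for x
  proof -
    have "S (R x) = sqrt cc *\<^sub>R S (\<Sum>n. acoef n *\<^sub>R (B ^^ n) x)" by (simp add: R_def blin(2)[OF Sbl])
    also have "S (\<Sum>n. acoef n *\<^sub>R (B ^^ n) x) = (\<Sum>n. S (acoef n *\<^sub>R (B ^^ n) x))"
      by (rule bounded_linear.suminf[OF Sbl summ])
    also have "\<dots> = (\<Sum>n. acoef n *\<^sub>R (B ^^ n) (S x))" by (simp add: blin(2)[OF Sbl] SW)
    finally show ?thesis by (simp add: R_def)
  qed
  have TS: "T x = S (S x)" for x using SS by (metis comp_apply)
  define w where "w = S v - R v"
  define z where "z = S w + R w"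
  have Dz: "S z - R z = 0"
  proof -
    have "S z - R z = S (S w) + S (R w) - R (S w) - R (R w)"
      by (simp add: z_def blin(1)[OF Sbl] blin(1)[OF R_bl])
    also have "\<dots> = 0" by (simp add: SR R_sq TS[symmetric])
    finally show ?thesis .
  qed
  have "inner w z = inner v (S z - R z)"
  proof -
    have "inner w z = inner (S v) z - inner (R v) z" by (simp add: w_def inner_diff_left)
    also have "\<dots> = inner v (S z) - inner v (R z)" using Ssy R_sym unfolding symop_def by simp
    finally show ?thesis by (simp add: inner_diff_right)
  qed
  hence wz: "inner w (S w) + inner w (R w) = 0" using Dz by (simp add: z_def inner_add_right)
  have p1: "0 \<le> inner w (S w)" using Spo unfolding posop_def by blast
  have p2: "0 \<le> inner w (R w)" using R_pos unfolding posop_def by blast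
  have "S w = 0" using pos_zero[OF Sbl Ssy Spo] wz p1 p2 by simp
  moreover have "R w = 0" using pos_zero[OF R_bl R_sym R_pos] wz p1 p2 by simp
  ultimately have "S w - R w = 0" by simp
  have "inner w w = inner v (S w - R w)"
  proof -
    have "inner w w = inner (S v) w - inner (R v) w" by (simp add: w_def inner_diff_left)
    also have "\<dots> = inner v (S w) - inner v (R w)" using Ssy R_sym unfolding symop_def by simp
    finally show ?thesis by (simp add: inner_diff_right)
  qed
  hence "inner w w = 0" using \<open>S w = 0\<close> \<open>R w = 0\<close> by simp
  hence "w = 0" by simp
  thus "S v = R v" by (simp add: w_def)
qed

lemma R_comp: "R \<circ> R = T" by (rule ext) (simp add: R_sq)

lemma sqrt_ex1: "\<exists>!S. bounded_linear S \<and> (\<forall>u v. inner (S u) v = inner u (S v)) \<and> (\<forall>u. 0 \<le> inner u (S u)) \<and> S \<circ> S = T"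
proof (rule ex1I[of _ R])
  show "bounded_linear R \<and> (\<forall>u v. inner (R u) v = inner u (R v)) \<and> (\<forall>u. 0 \<le> inner u (R u)) \<and> R \<circ> R = T"
    using R_bl R_sym R_pos R_comp unfolding symop_def posop_def by blast
  fix S assume "bounded_linear S \<and> (\<forall>u v. inner (S u) v = inner u (S v)) \<and> (\<forall>u. 0 \<le> inner u (S u)) \<and> S \<circ> S = T"
  thus "S = R" using R_unique unfolding symop_def posop_def by blast
qed

lemma op_sqrt_props: "bounded_linear (op_sqrt T) \<and> (\<forall>u v. inner (op_sqrt T u) v = inner u (op_sqrt T v))
   \<and> (\<forall>u. 0 \<le> inner u (op_sqrt T u)) \<and> op_sqrt T \<circ> op_sqrt T = T"
  unfolding op_sqrt_def by (rule theI'[OF sqrt_ex1])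

end

lemma inv_sqrt_norm:
  fixes T :: "'h::{real_inner,complete_space} \<Rightarrow> 'h"
  assumes "sqset T \<rho>" and Ti: "\<And>y. T (Ti y) = y"
  shows "(norm (inv (op_sqrt T) y))\<^sup>2 = inner (Ti y) y"
proof -
  interpret sqset T \<rho> by fact
  let ?S = "op_sqrt T"
  have P: "bounded_linear ?S" "\<And>u v. inner (?S u) v = inner u (?S v)" "?S \<circ> ?S = T"
    using op_sqrt_props by auto
  have TS: "T x = ?S (?S x)" for x using P(3) by (metis comp_apply)
  have Tinj: "inj T"
  proof (rule injI)
    fix a b assume "T a = T b"
    hence "T (a - b) = 0" by (simp add: blin(3)[OF bl])
    hence "\<rho> * (norm (a - b))\<^sup>2 \<le> 0" using co[of "a - b"] by simp
    hence "norm (a - b) = 0" using rp by (simp add: mult_le_0_iff)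
    thus "a = b" by simp
  qed
  have Sinj: "inj ?S"
  proof (rule injI)
    fix a b assume "?S a = ?S b"
    hence "T a = T b" by (simp add: TS)
    thus "a = b" using Tinj by (simp add: inj_eq)
  qed
  have Ssurj: "surj ?S"
  proof -
    have "?S (?S (Ti y')) = y'" for y' using Ti[of y'] TS[of "Ti y'"] by simp
    thus ?thesis by (rule surjI)
  qed
  define z where "z = inv ?S y"
  have Sz: "?S z = y" unfolding z_def by (rule surj_f_inv_f[OF Ssurj])
  define u where "u = inv ?S z"
  have Su: "?S u = z" unfolding u_def by (rule surj_f_inv_f[OF Ssurj])
  have Tu: "T u = y" using TS[of u] Su Sz by simp
  have "Ti y = u" using injD[OF Tinj] Ti[of y] Tu by metis
  have "(norm z)\<^sup>2 = inner (?S u) z" by (simp add: Su power2_norm_eq_inner)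
  also have "\<dots> = inner u (?S z)" by (rule P(2))
  also have "\<dots> = inner (Ti y) y" using \<open>Ti y = u\<close> Sz by simp
  finally show ?thesis by (simp add: z_def)
qed

definition Tn :: "real \<Rightarrow> (nat \<Rightarrow> 'h::real_inner) \<Rightarrow> nat \<Rightarrow> 'h \<Rightarrow> 'h" where
  "Tn \<rho> xs n y = \<rho> *\<^sub>R y + (\<Sum>i\<in>{1..n}. inner (xs i) y *\<^sub>R xs i)"

fun Inv :: "real \<Rightarrow> (nat \<Rightarrow> 'h::real_inner) \<Rightarrow> nat \<Rightarrow> 'h \<Rightarrow> 'h" where
  "Inv \<rho> xs 0 y = (1/\<rho>) *\<^sub>R y"
| "Inv \<rho> xs (Suc n) y = Inv \<rho> xs n y -
     (inner (Inv \<rho> xs n (xs (Suc n))) y / (1 + inner (xs (Suc n)) (Inv \<rho> xs n (xs (Suc n))))) *\<^sub>R Inv \<rho> xs n (xs (Suc n))"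

lemma bl_rank1: "bounded_linear (\<lambda>y. inner a y *\<^sub>R (b::'h::real_inner))"
  using bounded_linear_compose[OF bounded_linear_scaleR_left[of b] bounded_linear_inner_right[of a]] by (simp add: o_def)

lemma Tn_bl: "bounded_linear (Tn \<rho> xs n)"
proof -
  have "bounded_linear (\<lambda>y. \<rho> *\<^sub>R y + (\<Sum>i\<in>{1..n}. inner (xs i) y *\<^sub>R xs i))"
    by (intro bounded_linear_add bounded_linear_scaleR_right bounded_linear_sum bl_rank1)
  thus ?thesis unfolding Tn_def[abs_def] .
qed

lemma Tn_sym: "symop (Tn \<rho> xs n)"
  unfolding symop_def Tn_def
  by (simp add: inner_add_left inner_add_right inner_sum_left inner_sum_right mult.commute inner_commute)

lemma Tn_co:
  fixes xs :: "nat \<Rightarrow> 'h::real_inner"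
  shows "\<rho> * (norm u)\<^sup>2 \<le> inner u (Tn \<rho> xs n u)"
proof -
  have "inner u (Tn \<rho> xs n u) = \<rho> * inner u u + (\<Sum>i\<in>{1..n}. (inner (xs i) u)\<^sup>2)"
    unfolding Tn_def by (simp add: inner_add_right inner_sum_right power2_eq_square inner_commute)
  also have "inner u u = (norm u)\<^sup>2" by (simp add: power2_norm_eq_inner)
  moreover have "0 \<le> (\<Sum>i\<in>{1..n}. (inner (xs i) u)\<^sup>2)" by (intro sum_nonneg) auto
  ultimately show ?thesis by simp
qed

lemma Tn_Suc: "Tn \<rho> xs (Suc n) y = Tn \<rho> xs n y + inner (xs (Suc n)) y *\<^sub>R xs (Suc n)"
  unfolding Tn_def by (simp add: algebra_simps)

lemma Inv_bl: "bounded_linear (Inv \<rho> xs n)"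
proof (induction n)
  case 0
  show ?case by (simp add: bounded_linear_scaleR_right)
next
  case (Suc n)
  let ?w = "Inv \<rho> xs n (xs (Suc n))"
  let ?d = "1 + inner (xs (Suc n)) ?w"
  have "bounded_linear (\<lambda>y. (inner ?w y / ?d) *\<^sub>R ?w)"
    using bl_rank1[of "(1/?d) *\<^sub>R ?w" ?w] by (simp add: inner_scaleR_left divide_inverse mult.commute)
  hence "bounded_linear (\<lambda>y. Inv \<rho> xs n y - (inner ?w y / ?d) *\<^sub>R ?w)"
    using Suc by (intro bounded_linear_sub)
  thus ?case by (simp add: o_def)
qed

lemma Inv_sym: "inner (Inv \<rho> xs n y) z = inner y (Inv \<rho> xs n z)"
proof (induction n arbitrary: y z)
  case (Suc n)
  let ?w = "Inv \<rho> xs n (xs (Suc n))"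
  let ?d = "1 + inner (xs (Suc n)) ?w"
  have a: "inner (Inv \<rho> xs (Suc n) y) z = inner (Inv \<rho> xs n y) z - inner ?w y / ?d * inner ?w z"
    by (simp only: Inv.simps inner_diff_left inner_scaleR_left)
  have b: "inner y (Inv \<rho> xs (Suc n) z) = inner y (Inv \<rho> xs n z) - inner ?w z / ?d * inner y ?w"
    by (simp only: Inv.simps inner_diff_right inner_scaleR_right)
  have c: "inner y ?w = inner ?w y" by (rule inner_commute)
  show ?case unfolding a b c Suc.IH[of y z] by simp
qed (simp add: inner_commute)

lemma Inv_right:
  assumes rp: "\<rho> > 0"
  shows "Tn \<rho> xs n (Inv \<rho> xs n y) = y"
proof (induction n arbitrary: y)
  case 0
  show ?case using rp by (simp add: Tn_def)
next
  case (Suc n)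
  let ?x = "xs (Suc n)"
  let ?w = "Inv \<rho> xs n ?x"
  let ?d = "1 + inner ?x ?w"
  have pos: "0 \<le> inner ?x ?w"
  proof -
    have "inner ?x ?w = inner (Tn \<rho> xs n ?w) ?w" using Suc[of ?x] by simp
    also have "\<dots> = inner ?w (Tn \<rho> xs n ?w)" by (simp add: inner_commute)
    also have "\<dots> \<ge> \<rho> * (norm ?w)\<^sup>2" by (rule Tn_co)
    finally show ?thesis using rp by (smt (verit) mult_nonneg_nonneg zero_le_power2)
  qed
  hence dpos: "?d > 0" by simp
  define al where "al = inner ?w y / ?d"
  have e1: "Inv \<rho> xs (Suc n) y = Inv \<rho> xs n y - al *\<^sub>R ?w" by (simp add: al_def)
  have lin0: "Tn \<rho> xs n (Inv \<rho> xs n y - al *\<^sub>R ?w) = Tn \<rho> xs n (Inv \<rho> xs n y) - al *\<^sub>R Tn \<rho> xs n ?w"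
    by (simp add: blin[OF Tn_bl])
  have lin: "Tn \<rho> xs n (Inv \<rho> xs n y - al *\<^sub>R ?w) = y - al *\<^sub>R ?x"
    unfolding lin0 Suc.IH ..
  have xi: "inner ?x (Inv \<rho> xs n y) = inner ?w y" using Inv_sym by (metis inner_commute)
  have "Tn \<rho> xs (Suc n) (Inv \<rho> xs (Suc n) y) = Tn \<rho> xs n (Inv \<rho> xs n y - al *\<^sub>R ?w) + inner ?x (Inv \<rho> xs n y - al *\<^sub>R ?w) *\<^sub>R ?x"
    by (simp only: e1 Tn_Suc)
  also have "\<dots> = y - al *\<^sub>R ?x + inner ?x (Inv \<rho> xs n y - al *\<^sub>R ?w) *\<^sub>R ?x"
    by (simp only: lin)
  also have "inner ?x (Inv \<rho> xs n y - al *\<^sub>R ?w) = inner ?w y - al * inner ?x ?w"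
    by (simp add: inner_diff_right xi)
  also have "y - al *\<^sub>R ?x + (inner ?w y - al * inner ?x ?w) *\<^sub>R ?x = y + (inner ?w y - al * ?d) *\<^sub>R ?x"
    by (simp add: algebra_simps)
  also have "inner ?w y - al * ?d = 0" using dpos by (simp add: al_def)
  finally show ?case by simp
qed

lemma Inv_pos:
  assumes rp: "\<rho> > 0"
  shows "0 \<le> inner y (Inv \<rho> xs n y)"
proof -
  let ?w = "Inv \<rho> xs n y"
  have tw: "Tn \<rho> xs n ?w = y" by (rule Inv_right[OF rp])
  have "inner y ?w = inner (Tn \<rho> xs n ?w) ?w" by (simp only: tw)
  also have "\<dots> = inner ?w (Tn \<rho> xs n ?w)" by (simp add: inner_commute)
  also have "\<dots> \<ge> \<rho> * (norm ?w)\<^sup>2" by (rule Tn_co)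
  finally show ?thesis using rp by (smt (verit) mult_nonneg_nonneg zero_le_power2)
qed

lemma Inv_posop: "\<rho> > 0 \<Longrightarrow> posop (Inv \<rho> xs n)"
  unfolding posop_def using Inv_pos by blast
lemma Inv_symop: "symop (Inv \<rho> xs n)"
  unfolding symop_def using Inv_sym by blast

lemma Inv_mono:
  assumes rp: "\<rho> > 0"
  shows "inner (Inv \<rho> xs (Suc n) y) y \<le> inner (Inv \<rho> xs n y) y"
proof -
  let ?x = "xs (Suc n)"
  let ?w = "Inv \<rho> xs n ?x"
  have "0 \<le> inner ?x ?w" using Inv_pos[OF rp] .
  hence d: "1 + inner ?x ?w > 0" by simp
  have "inner (Inv \<rho> xs (Suc n) y) y = inner (Inv \<rho> xs n y) y - (inner ?w y)\<^sup>2 / (1 + inner ?x ?w)"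
    by (simp add: inner_diff_left inner_diff_right power2_eq_square inner_commute)
  moreover have "(inner ?w y)\<^sup>2 / (1 + inner ?x ?w) \<ge> 0" using d by simp
  ultimately show ?thesis by simp
qed

lemma Inv_g2:
  assumes rp: "\<rho> > 0"
  shows "inner (Inv \<rho> xs (Suc n) (xs (Suc n))) (xs (Suc n)) \<le> 1"
proof -
  let ?x = "xs (Suc n)"
  let ?w = "Inv \<rho> xs n ?x"
  define c where "c = inner ?x ?w"
  have c0: "0 \<le> c" unfolding c_def using Inv_pos[OF rp] .
  have wx: "inner ?w ?x = c" unfolding c_def by (simp add: inner_commute)
  have "inner (Inv \<rho> xs (Suc n) ?x) ?x = c - c * c / (1 + c)"
    by (simp add: inner_diff_left wx c_def[symmetric])
  also have "\<dots> = c / (1 + c)" using c0 by (simp add: field_simps)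
  also have "\<dots> \<le> 1" using c0 by simp
  finally show ?thesis .
qed

lemma Vop_Tn: "(\<lambda>v. \<rho> *\<^sub>R v + Vop X t \<omega> v) = Tn \<rho> (\<lambda>i. X i \<omega>) t"
  by (rule ext) (simp add: Vop_def outer_op_def Tn_def)

lemma norm_isq:
  fixes X :: "nat \<Rightarrow> 'a \<Rightarrow> 'h::{real_inner,complete_space}"
  assumes rp: "\<rho> > 0"
  shows "(norm (inv_sqrt_op \<rho> (Vop X t \<omega>) y))\<^sup>2 = inner (Inv \<rho> (\<lambda>i. X i \<omega>) t y) y"
proof -
  have sq: "sqset (Tn \<rho> (\<lambda>i. X i \<omega>) t) \<rho>"
    unfolding sqset_def using Tn_bl Tn_sym Tn_co rp by blast
  show ?thesis
    unfolding inv_sqrt_op_def Vop_Tn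
    by (rule inv_sqrt_norm[OF sq Inv_right[OF rp]])
qed

declare Inv.simps(2)[simp del]

definition Dfun :: "real \<Rightarrow> real \<Rightarrow> (nat \<Rightarrow> 'h::real_inner) \<Rightarrow> nat \<Rightarrow> 'h \<Rightarrow> real" where
  "Dfun \<rho> lam xs n u = (if sqrt (inner (Inv \<rho> xs (Suc n) u) u) = 0 then 0
     else lam * inner (Inv \<rho> xs (Suc n) (xs (Suc n))) u / sqrt (inner (Inv \<rho> xs (Suc n) u) u)
          * sinh (lam * sqrt (inner (Inv \<rho> xs (Suc n) u) u)))"

lemma step_pointwise:
  fixes xs :: "nat \<Rightarrow> 'h::real_inner"
  assumes rp: "\<rho> > 0" and lp: "lam > 0"
  shows "cosh (lam * sqrt (inner (Inv \<rho> xs (Suc n) (u + e *\<^sub>R xs (Suc n))) (u + e *\<^sub>R xs (Suc n))))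
     \<le> cosh (lam * sqrt (inner (Inv \<rho> xs n u) u))
        * (1 + inner (Inv \<rho> xs (Suc n) (xs (Suc n))) (xs (Suc n)) * (exp (lam * \<bar>e\<bar>) - lam * \<bar>e\<bar> - 1))
       + e * Dfun \<rho> lam xs n u"
proof -
  let ?I = "Inv \<rho> xs (Suc n)"
  let ?x = "xs (Suc n)"
  define r2 where "r2 = inner (?I u) u"
  define r where "r = sqrt r2"
  define p where "p = inner (?I ?x) u"
  define g2 where "g2 = inner (?I ?x) ?x"
  define C where "C = cosh (lam * sqrt (inner (Inv \<rho> xs n u) u))"
  define ph where "ph = exp (lam * \<bar>e\<bar>) - lam * \<bar>e\<bar> - 1"
  have r20: "0 \<le> r2" unfolding r2_def using Inv_pos[OF rp, of u xs "Suc n"] inner_commute by metis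
  have g20: "0 \<le> g2" unfolding g2_def using Inv_pos[OF rp, of ?x xs "Suc n"] inner_commute by metis
  have g21: "g2 \<le> 1" unfolding g2_def by (rule Inv_g2[OF rp])
  have r0: "0 \<le> r" unfolding r_def using r20 by simp
  have rr: "r * r = r2" unfolding r_def using r20 by simp
  have ph0: "0 \<le> ph" unfolding ph_def using exp_ge_add_one_self[of "lam * \<bar>e\<bar>"] by linarith
  have Ilin: "?I (u + e *\<^sub>R ?x) = ?I u + e *\<^sub>R ?I ?x" by (simp add: blin[OF Inv_bl])
  have sy: "inner (?I u) ?x = p" unfolding p_def using Inv_sym[of \<rho> xs "Suc n" u ?x] Inv_sym[of \<rho> xs "Suc n" ?x u]
    by (simp add: inner_commute)
  have Qn: "inner (?I (u + e *\<^sub>R ?x)) (u + e *\<^sub>R ?x) = r2 + 2 * e * p + e\<^sup>2 * g2"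
    unfolding Ilin by (simp add: inner_add_left inner_add_right sy r2_def p_def g2_def power2_eq_square algebra_simps)
  have cs: "p\<^sup>2 \<le> g2 * r2"
  proof -
    have "(inner ?x (?I u))\<^sup>2 \<le> inner ?x (?I ?x) * inner u (?I u)"
      by (rule semi_cs[OF Inv_bl Inv_symop Inv_posop[OF rp]])
    moreover have "inner ?x (?I u) = p" using sy by (simp add: inner_commute)
    ultimately show ?thesis unfolding g2_def r2_def by (simp add: inner_commute)
  qed
  define a where "a = lam * r"
  define al where "al = (if r = 0 then 0 else lam * e * p / r)"
  define ta where "ta = lam * \<bar>e\<bar> * sqrt g2"
  have a0: "0 \<le> a" unfolding a_def using lp r0 by simp
  have p0: "r = 0 \<Longrightarrow> p = 0"
  proof -
    assume "r = 0" hence "r2 = 0" using rr by simp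
    hence "p\<^sup>2 \<le> 0" using cs by simp
    thus "p = 0" by simp
  qed
  have alta: "\<bar>al\<bar> \<le> ta"
  proof (cases "r = 0")
    case True thus ?thesis unfolding al_def ta_def using lp g20 by simp
  next
    case False
    hence rpos: "r > 0" using r0 by simp
    have "\<bar>p\<bar> = sqrt (p\<^sup>2)" by simp
    also have "\<dots> \<le> sqrt (g2 * r2)" using cs by (rule real_sqrt_le_mono)
    also have "\<dots> = sqrt g2 * r" unfolding r_def by (simp add: real_sqrt_mult)
    finally have pb: "\<bar>p\<bar> \<le> sqrt g2 * r" .
    have "\<bar>al\<bar> = lam * \<bar>e\<bar> * \<bar>p\<bar> / r" using False lp rpos by (simp add: al_def abs_mult)
    also have "\<dots> \<le> lam * \<bar>e\<bar> * (sqrt g2 * r) / r"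
      using pb lp rpos by (intro divide_right_mono mult_left_mono) auto
    also have "\<dots> = ta" using rpos by (simp add: ta_def)
    finally show ?thesis .
  qed
  have ident: "a\<^sup>2 + 2*a*al + ta\<^sup>2 = lam\<^sup>2 * (r2 + 2 * e * p + e\<^sup>2 * g2)"
  proof (cases "r = 0")
    case True
    hence "r2 = 0" "p = 0" using rr p0 by auto
    thus ?thesis using True g20 unfolding a_def al_def ta_def by (simp add: power_mult_distrib)
  next
    case False
    thus ?thesis using g20 unfolding a_def al_def ta_def
      by (simp add: power_mult_distrib power2_eq_square rr[symmetric] field_simps)
  qed
  have Qnn: "0 \<le> r2 + 2 * e * p + e\<^sup>2 * g2"
    unfolding Qn[symmetric] using Inv_pos[OF rp, of "u + e *\<^sub>R ?x" xs "Suc n"] inner_commute by metis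
  have sq: "sqrt (a\<^sup>2 + 2*a*al + ta\<^sup>2) = lam * sqrt (r2 + 2 * e * p + e\<^sup>2 * g2)"
    unfolding ident using lp by (simp add: real_sqrt_mult)
  have main: "cosh (sqrt (a\<^sup>2 + 2*a*al + ta\<^sup>2)) \<le> cosh a + al * sinh a + cosh a * (exp ta - ta - 1)"
    by (rule cosh_main[OF a0 alta])
  have D: "al * sinh a = e * Dfun \<rho> lam xs n u"
    unfolding Dfun_def al_def a_def r_def[symmetric] r2_def[symmetric] p_def[symmetric]
    by (cases "r = 0") (simp_all add: r_def[symmetric] p_def[symmetric])
  have phs: "exp ta - ta - 1 \<le> g2 * ph"
  proof -
    have "exp (sqrt g2 * (lam * \<bar>e\<bar>)) - sqrt g2 * (lam * \<bar>e\<bar>) - 1 \<le> (sqrt g2)\<^sup>2 * (exp (lam * \<bar>e\<bar>) - lam * \<bar>e\<bar> - 1)"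
      using g20 g21 lp by (intro phi_scale) auto
    thus ?thesis using g20 unfolding ta_def ph_def by (simp add: mult_ac)
  qed
  have ca: "cosh a \<le> C"
  proof -
    have "r2 \<le> inner (Inv \<rho> xs n u) u" unfolding r2_def by (rule Inv_mono[OF rp])
    hence "r \<le> sqrt (inner (Inv \<rho> xs n u) u)" unfolding r_def by (rule real_sqrt_le_mono)
    hence "a \<le> lam * sqrt (inner (Inv \<rho> xs n u) u)" unfolding a_def using lp by simp
    moreover have "0 \<le> lam * sqrt (inner (Inv \<rho> xs n u) u)" using lp r0 \<open>r \<le> _\<close> by (meson mult_nonneg_nonneg less_imp_le order_trans)
    ultimately show ?thesis unfolding C_def using a0 by (simp add: cosh_real_nonneg_le_iff)
  qed
  have "cosh (lam * sqrt (inner (?I (u + e *\<^sub>R ?x)) (u + e *\<^sub>R ?x))) = cosh (sqrt (a\<^sup>2 + 2*a*al + ta\<^sup>2))"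
    unfolding sq Qn ..
  also have "\<dots> \<le> cosh a + al * sinh a + cosh a * (exp ta - ta - 1)" by (rule main)
  also have "\<dots> \<le> cosh a * (1 + g2 * ph) + e * Dfun \<rho> lam xs n u"
  proof -
    have m: "cosh a * (exp ta - ta - 1) \<le> cosh a * (g2 * ph)" using phs by (intro mult_left_mono) auto
    have dist: "cosh a * (1 + g2 * ph) = cosh a + cosh a * (g2 * ph)" by (simp add: algebra_simps)
    show ?thesis using D dist m by linarith
  qed
  also have "\<dots> \<le> C * (1 + g2 * ph) + e * Dfun \<rho> lam xs n u"
    using ca g20 ph0 by (intro add_right_mono mult_right_mono) auto
  finally show ?thesis unfolding C_def g2_def ph_def .
qed

lemma ennreal_split:
  fixes z h e :: real
  assumes z0: "0 \<le> z" and zw: "0 \<le> z + h * e"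
  shows "ennreal (z + h * e) + (ennreal h * ennreal (- e) + ennreal (- h) * ennreal e)
       = ennreal z + (ennreal h * ennreal e + ennreal (- h) * ennreal (- e))"
proof (cases "0 \<le> h")
  case h: True
  show ?thesis
  proof (cases "0 \<le> e")
    case e: True
    have "ennreal (z + h * e) = ennreal z + ennreal h * ennreal e"
      using z0 h e by (simp add: ennreal_mult)
    thus ?thesis using h e by (simp add: ennreal_neg)
  next
    case e: False
    have m: "ennreal h * ennreal (- e) = ennreal (h * (- e))" by (rule ennreal_mult[symmetric]) (use h e in auto)
    have "ennreal (z + h * e) + ennreal (h * (- e)) = ennreal (z + h * e + h * (- e))"
      using zw h e mult_nonneg_nonpos[of h e] by (intro ennreal_plus[symmetric]) auto
    hence "ennreal (z + h * e) + ennreal h * ennreal (- e) = ennreal z" unfolding m by simp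
    thus ?thesis using h e by (simp add: ennreal_neg)
  qed
next
  case h: False
  show ?thesis
  proof (cases "0 \<le> e")
    case e: True
    have m: "ennreal (- h) * ennreal e = ennreal ((- h) * e)" by (rule ennreal_mult[symmetric]) (use h e in auto)
    have "ennreal (z + h * e) + ennreal ((- h) * e) = ennreal (z + h * e + (- h) * e)"
      using zw h e mult_nonpos_nonneg[of h e] by (intro ennreal_plus[symmetric]) auto
    hence "ennreal (z + h * e) + ennreal (- h) * ennreal e = ennreal z" unfolding m by simp
    thus ?thesis using h e by (simp add: ennreal_neg add.commute)
  next
    case e: False
    have m: "ennreal (- h) * ennreal (- e) = ennreal (h * e)"
      using ennreal_mult[of "- h" "- e"] h e by simp
    have "ennreal (z + h * e) = ennreal z + ennreal (h * e)"
      using z0 h e by (intro ennreal_plus) (auto intro: mult_nonpos_nonpos)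
    hence "ennreal (z + h * e) = ennreal z + ennreal (- h) * ennreal (- e)" unfolding m .
    thus ?thesis using h e by (simp add: ennreal_neg)
  qed
qed

context sigma_finite_subalgebra
begin

lemma nn_ce_finite:
  assumes [measurable]: "f \<in> borel_measurable M" and fin: "(\<integral>\<^sup>+x. f x \<partial>M) \<noteq> \<infinity>"
  shows "AE x in M. nn_cond_exp M F f x \<noteq> \<infinity>"
proof (rule nn_integral_PInf_AE)
  show "nn_cond_exp M F f \<in> borel_measurable M" by simp
  have "(\<integral>\<^sup>+x. 1 * nn_cond_exp M F f x \<partial>M) = (\<integral>\<^sup>+x. 1 * f x \<partial>M)"
    by (rule nn_cond_exp_intg) auto
  thus "integral\<^sup>N M (nn_cond_exp M F f) \<noteq> \<infinity>" using fin by simp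
qed

lemma ce_pm:
  fixes e :: "'a \<Rightarrow> real"
  assumes ei: "integrable M e" and ce: "AE x in M. real_cond_exp M F e x = 0"
  shows "AE x in M. nn_cond_exp M F (\<lambda>x. ennreal (e x)) x = nn_cond_exp M F (\<lambda>x. ennreal (- e x)) x
           \<and> nn_cond_exp M F (\<lambda>x. ennreal (e x)) x \<noteq> \<infinity>"
proof -
  have [measurable]: "e \<in> borel_measurable M" using ei by auto
  have f1: "AE x in M. nn_cond_exp M F (\<lambda>x. ennreal (e x)) x \<noteq> \<infinity>"
    using ei by (intro nn_ce_finite) auto
  have f2: "AE x in M. nn_cond_exp M F (\<lambda>x. ennreal (- e x)) x \<noteq> \<infinity>"
    using ei by (intro nn_ce_finite) auto
  show ?thesis using f1 f2 ce
  proof eventually_elim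
    case (elim x)
    let ?a = "nn_cond_exp M F (\<lambda>x. ennreal (e x)) x"
    let ?b = "nn_cond_exp M F (\<lambda>x. ennreal (- e x)) x"
    have ab: "enn2real ?a = enn2real ?b"
      using elim(3) unfolding real_cond_exp_def by simp
    have a: "ennreal (enn2real ?a) = ?a" by (rule ennreal_enn2real) (use elim(1) in \<open>simp add: less_top[symmetric]\<close>)
    have b: "ennreal (enn2real ?b) = ?b" by (rule ennreal_enn2real) (use elim(2) in \<open>simp add: less_top[symmetric]\<close>)
    have "?a = ?b" using a b ab by metis
    thus ?case using elim(1) by simp
  qed
qed

lemma ce_cancel:
  fixes Z h e :: "'a \<Rightarrow> real"
  assumes Zm[measurable]: "Z \<in> borel_measurable M" and hm[measurable]: "h \<in> borel_measurable F"
    and ei: "integrable M e" and ce: "AE x in M. real_cond_exp M F e x = 0"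
    and Z0: "\<And>x. 0 \<le> Z x" and ZW: "\<And>x. 0 \<le> Z x + h x * e x"
  shows "AE x in M. nn_cond_exp M F (\<lambda>x. ennreal (Z x + h x * e x)) x = nn_cond_exp M F (\<lambda>x. ennreal (Z x)) x"
proof -
  have em[measurable]: "e \<in> borel_measurable M" using ei by auto
  have hM[measurable]: "h \<in> borel_measurable M" using measurable_from_subalg[OF subalg hm] .
  let ?N = "nn_cond_exp M F"
  define ep where "ep x = ennreal (e x)" for x
  define en where "en x = ennreal (- e x)" for x
  define hp where "hp x = ennreal (h x)" for x
  define hn where "hn x = ennreal (- h x)" for x
  have [measurable]: "ep \<in> borel_measurable M" "en \<in> borel_measurable M"
    unfolding ep_def en_def by measurable
  have [measurable]: "hp \<in> borel_measurable F" "hn \<in> borel_measurable F"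
    unfolding hp_def hn_def by measurable
  have [measurable]: "hp \<in> borel_measurable M" "hn \<in> borel_measurable M"
    unfolding hp_def hn_def by measurable
  define A where "A x = hp x * ep x + hn x * en x" for x
  define Bq where "Bq x = hp x * en x + hn x * ep x" for x
  have [measurable]: "A \<in> borel_measurable M" "Bq \<in> borel_measurable M" unfolding A_def Bq_def by measurable
  have pw: "(\<lambda>x. ennreal (Z x + h x * e x) + Bq x) = (\<lambda>x. ennreal (Z x) + A x)"
    unfolding A_def Bq_def ep_def en_def hp_def hn_def using ennreal_split[OF Z0 ZW] by auto
  have s1: "AE x in M. ?N (\<lambda>x. ennreal (Z x + h x * e x)) x + ?N Bq x = ?N (\<lambda>x. ennreal (Z x + h x * e x) + Bq x) x"
    by (rule nn_cond_exp_sum) measurable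
  have s2: "AE x in M. ?N (\<lambda>x. ennreal (Z x)) x + ?N A x = ?N (\<lambda>x. ennreal (Z x) + A x) x"
    by (rule nn_cond_exp_sum) measurable
  have a1: "AE x in M. ?N (\<lambda>x. hp x * ep x) x + ?N (\<lambda>x. hn x * en x) x = ?N A x"
    unfolding A_def by (rule nn_cond_exp_sum) measurable
  have a2: "AE x in M. ?N (\<lambda>x. hp x * en x) x + ?N (\<lambda>x. hn x * ep x) x = ?N Bq x"
    unfolding Bq_def by (rule nn_cond_exp_sum) measurable
  have p1: "AE x in M. hp x * ?N ep x = ?N (\<lambda>x. hp x * ep x) x" by (rule nn_cond_exp_prod) measurable
  have p2: "AE x in M. hn x * ?N en x = ?N (\<lambda>x. hn x * en x) x" by (rule nn_cond_exp_prod) measurable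
  have p3: "AE x in M. hp x * ?N en x = ?N (\<lambda>x. hp x * en x) x" by (rule nn_cond_exp_prod) measurable
  have p4: "AE x in M. hn x * ?N ep x = ?N (\<lambda>x. hn x * ep x) x" by (rule nn_cond_exp_prod) measurable
  have pm: "AE x in M. ?N ep x = ?N en x \<and> ?N ep x \<noteq> \<infinity>"
    unfolding ep_def en_def by (rule ce_pm[OF ei ce])
  show ?thesis using s1 s2 a1 a2 p1 p2 p3 p4 pm
  proof eventually_elim
    case (elim x)
    have eA: "?N A x = hp x * ?N ep x + hn x * ?N en x" using elim(3) elim(5) elim(6) by simp
    have eB: "?N Bq x = hp x * ?N en x + hn x * ?N ep x" using elim(4) elim(7) elim(8) by simp
    have eqAB: "?N A x = ?N Bq x" unfolding eA eB using elim(9) by simp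
    have fin: "?N Bq x \<noteq> \<infinity>"
    proof -
      have "?N Bq x = hp x * ?N en x + hn x * ?N ep x" by (rule eB)
      moreover have "?N en x \<noteq> \<infinity>" using elim(9) by auto
      moreover have "?N ep x \<noteq> \<infinity>" using elim(9) by auto
      ultimately show ?thesis unfolding hp_def hn_def by (simp add: ennreal_mult_eq_top_iff)
    qed
    have "?N (\<lambda>x. ennreal (Z x + h x * e x)) x + ?N Bq x = ?N (\<lambda>x. ennreal (Z x)) x + ?N Bq x"
      using elim(1,2) pw eqAB by simp
    hence "?N Bq x + ?N (\<lambda>x. ennreal (Z x + h x * e x)) x = ?N Bq x + ?N (\<lambda>x. ennreal (Z x)) x"
      by (simp add: add.commute)
    thus ?case using fin unfolding ennreal_add_left_cancel by simp
  qed
qed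

end

lemma Inv_meas:
  fixes X :: "nat \<Rightarrow> 'a \<Rightarrow> 'h::{real_inner, second_countable_topology}"
  assumes Xm: "\<And>i. 1 \<le> i \<Longrightarrow> i \<le> n \<Longrightarrow> X i \<in> borel_measurable N"
    and vm: "v \<in> borel_measurable N"
  shows "(\<lambda>\<omega>. Inv \<rho> (\<lambda>i. X i \<omega>) n (v \<omega>)) \<in> borel_measurable N"
  using Xm vm
proof (induction n arbitrary: v)
  case 0
  thus ?case by simp
next
  case (Suc n)
  have a: "(\<lambda>\<omega>. Inv \<rho> (\<lambda>i. X i \<omega>) n (v \<omega>)) \<in> borel_measurable N"
    using Suc.IH[of v] Suc.prems by auto
  have xm: "X (Suc n) \<in> borel_measurable N" using Suc.prems by auto
  have b: "(\<lambda>\<omega>. Inv \<rho> (\<lambda>i. X i \<omega>) n (X (Suc n) \<omega>)) \<in> borel_measurable N"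
    using Suc.IH[of "X (Suc n)"] Suc.prems xm by auto
  have "(\<lambda>\<omega>. Inv \<rho> (\<lambda>i. X i \<omega>) n (v \<omega>) -
     (inner (Inv \<rho> (\<lambda>i. X i \<omega>) n (X (Suc n) \<omega>)) (v \<omega>) / (1 + inner (X (Suc n) \<omega>) (Inv \<rho> (\<lambda>i. X i \<omega>) n (X (Suc n) \<omega>))))
       *\<^sub>R Inv \<rho> (\<lambda>i. X i \<omega>) n (X (Suc n) \<omega>)) \<in> borel_measurable N"
    using a b xm Suc.prems(2) by measurable
  thus ?case by (simp add: Inv.simps(2))
qed

locale mainctx =
  fixes M :: "'a measure" and F :: "nat \<Rightarrow> 'a measure"
    and X :: "nat \<Rightarrow> 'a \<Rightarrow> 'h::{real_inner, complete_space, second_countable_topology}"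
    and \<epsilon> :: "nat \<Rightarrow> 'a \<Rightarrow> real" and \<rho> lam :: real
  assumes ps: "prob_space M"
    and filt: "is_filtration M F"
    and Xm: "\<And>t. t \<ge> 1 \<Longrightarrow> X t \<in> borel_measurable (F (t - 1))"
    and em: "\<And>t. t \<ge> 1 \<Longrightarrow> \<epsilon> t \<in> borel_measurable (F t)"
    and ei: "\<And>t. t \<ge> 1 \<Longrightarrow> integrable M (\<epsilon> t)"
    and ce: "\<And>t. t \<ge> 1 \<Longrightarrow> AE \<omega> in M. real_cond_exp M (F (t - 1)) (\<epsilon> t) \<omega> = 0"
    and rp: "\<rho> > 0" and lp: "lam > 0"
begin

lemma sub: "subalgebra M (F t)" using filt unfolding is_filtration_def by blast

lemma subFF: "s \<le> t \<Longrightarrow> subalgebra (F t) (F s)"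
  using filt sub[of s] sub[of t] unfolding is_filtration_def subalgebra_def by auto

lemma sfs: "sigma_finite_subalgebra M (F t)"
proof -
  have "finite_measure M" using ps by (simp add: prob_space_def)
  hence "finite_measure_subalgebra M (F t)"
    using sub[of t] by (simp add: finite_measure_subalgebra_def finite_measure_subalgebra_axioms_def)
  thus ?thesis by (rule finite_measure_subalgebra_is_sigma_finite)
qed

lemma mono_meas: "s \<le> t \<Longrightarrow> f \<in> borel_measurable (F s) \<Longrightarrow> f \<in> borel_measurable (F t)"
  using measurable_from_subalg[OF subFF] by blast

lemma toM: "f \<in> borel_measurable (F t) \<Longrightarrow> f \<in> borel_measurable M"
  using measurable_from_subalg[OF sub] by blast

lemma Xk: "1 \<le> i \<Longrightarrow> i \<le> Suc k \<Longrightarrow> X i \<in> borel_measurable (F k)"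
  by (rule mono_meas[OF _ Xm]) auto

lemma ek: "1 \<le> i \<Longrightarrow> i \<le> k \<Longrightarrow> \<epsilon> i \<in> borel_measurable (F k)"
  by (rule mono_meas[OF _ em]) auto

definition Q where "Q t \<omega> y = inner (Inv \<rho> (\<lambda>i. X i \<omega>) t y) y"
definition P where "P t \<omega> = cosh (lam * sqrt (Q t \<omega> (Mvec X \<epsilon> t \<omega>)))"
definition g2 where "g2 t \<omega> = Q t \<omega> (X t \<omega>)"
definition ph where "ph t \<omega> = exp (lam * \<bar>\<epsilon> t \<omega>\<bar>) - lam * \<bar>\<epsilon> t \<omega>\<bar> - 1"
definition Es where "Es t \<omega> = (\<Sum>i\<in>{1..t}. e_term M F \<rho> X \<epsilon> lam i \<omega>)"
definition Ex where "Ex t \<omega> = (if Es t \<omega> = \<infinity> then 0 else exp (- enn2real (Es t \<omega>)))"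
definition Dn where "Dn n \<omega> = Dfun \<rho> lam (\<lambda>i. X i \<omega>) n (Mvec X \<epsilon> n \<omega>)"

lemma norm_eq: "norm (inv_sqrt_op \<rho> (Vop X t \<omega>) y) = sqrt (Q t \<omega> y)"
proof -
  have "norm (inv_sqrt_op \<rho> (Vop X t \<omega>) y) = sqrt ((norm (inv_sqrt_op \<rho> (Vop X t \<omega>) y))\<^sup>2)" by simp
  also have "\<dots> = sqrt (Q t \<omega> y)" unfolding norm_isq[OF rp] Q_def ..
  finally show ?thesis .
qed

lemma S_eq: "S_proc M F \<rho> X \<epsilon> lam t \<omega> = P t \<omega> * Ex t \<omega>"
  unfolding S_proc_def P_def Ex_def Es_def Let_def norm_eq ..

lemma e_eq: "e_term M F \<rho> X \<epsilon> lam t \<omega> = ennreal (g2 t \<omega>) * nn_cond_exp M (F (t - 1)) (\<lambda>y. ennreal (ph t y)) \<omega>"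
proof -
  have "(norm (Gvec \<rho> X t \<omega>))\<^sup>2 = g2 t \<omega>" unfolding Gvec_def norm_isq[OF rp] g2_def Q_def ..
  thus ?thesis unfolding e_term_def ph_def by simp
qed

lemma Q_meas:
  assumes "\<And>i. 1 \<le> i \<Longrightarrow> i \<le> t \<Longrightarrow> X i \<in> borel_measurable N" and vm: "v \<in> borel_measurable N"
  shows "(\<lambda>\<omega>. Q t \<omega> (v \<omega>)) \<in> borel_measurable N"
proof -
  have "(\<lambda>\<omega>. Inv \<rho> (\<lambda>i. X i \<omega>) t (v \<omega>)) \<in> borel_measurable N" by (rule Inv_meas[OF assms])
  thus ?thesis unfolding Q_def using vm by measurable
qed

lemma Mvec_meas: "Mvec X \<epsilon> t \<in> borel_measurable (F t)"
proof -
  have "(\<lambda>\<omega>. \<Sum>i\<in>{1..t}. \<epsilon> i \<omega> *\<^sub>R X i \<omega>) \<in> borel_measurable (F t)"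
  proof (rule borel_measurable_sum)
    fix i assume "i \<in> {1..t}"
    hence [measurable]: "\<epsilon> i \<in> borel_measurable (F t)" "X i \<in> borel_measurable (F t)"
      using ek Xk by auto
    show "(\<lambda>\<omega>. \<epsilon> i \<omega> *\<^sub>R X i \<omega>) \<in> borel_measurable (F t)" by measurable
  qed
  thus ?thesis unfolding Mvec_def[abs_def] .
qed

lemma P_meas: "P t \<in> borel_measurable (F t)"
proof -
  have "(\<lambda>\<omega>. Q t \<omega> (Mvec X \<epsilon> t \<omega>)) \<in> borel_measurable (F t)"
    by (rule Q_meas[OF _ Mvec_meas]) (auto intro: Xk)
  hence f: "(\<lambda>\<omega>. lam * sqrt (Q t \<omega> (Mvec X \<epsilon> t \<omega>))) \<in> borel_measurable (F t)" by measurable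
  have c: "(\<lambda>x::real. cosh x) \<in> borel_measurable borel"
    by (rule borel_measurable_continuous_onI) (intro continuous_intros)
  show ?thesis unfolding P_def[abs_def] using measurable_compose[OF f c] by simp
qed

lemma g2_meas: "t \<ge> 1 \<Longrightarrow> g2 t \<in> borel_measurable (F (t - 1))"
  unfolding g2_def[abs_def] by (rule Q_meas) (auto intro: Xk Xm)

lemma e_meas: "t \<ge> 1 \<Longrightarrow> e_term M F \<rho> X \<epsilon> lam t \<in> borel_measurable (F (t - 1))"
proof -
  assume t: "t \<ge> 1"
  have [measurable]: "g2 t \<in> borel_measurable (F (t - 1))" by (rule g2_meas[OF t])
  have "(\<lambda>\<omega>. ennreal (g2 t \<omega>) * nn_cond_exp M (F (t - 1)) (\<lambda>y. ennreal (ph t y)) \<omega>) \<in> borel_measurable (F (t - 1))"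
    by measurable
  thus ?thesis unfolding e_eq[abs_def] .
qed

lemma Es_meas: "t \<le> Suc k \<Longrightarrow> Es t \<in> borel_measurable (F k)"
proof -
  assume tk: "t \<le> Suc k"
  have "(\<lambda>\<omega>. \<Sum>i\<in>{1..t}. e_term M F \<rho> X \<epsilon> lam i \<omega>) \<in> borel_measurable (F k)"
  proof (rule borel_measurable_sum)
    fix i assume "i \<in> {1..t}"
    thus "e_term M F \<rho> X \<epsilon> lam i \<in> borel_measurable (F k)"
      using tk by (intro mono_meas[OF _ e_meas]) auto
  qed
  thus ?thesis unfolding Es_def[abs_def] .
qed

lemma Ex_meas: "t \<le> Suc k \<Longrightarrow> Ex t \<in> borel_measurable (F k)"
proof -
  assume "t \<le> Suc k"
  hence [measurable]: "Es t \<in> borel_measurable (F k)" by (rule Es_meas)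
  show ?thesis unfolding Ex_def[abs_def] by measurable
qed

lemma S_meas: "S_proc M F \<rho> X \<epsilon> lam t \<in> borel_measurable (F t)"
proof -
  have [measurable]: "P t \<in> borel_measurable (F t)" "Ex t \<in> borel_measurable (F t)"
    using P_meas Ex_meas by auto
  have "(\<lambda>\<omega>. P t \<omega> * Ex t \<omega>) \<in> borel_measurable (F t)" by measurable
  thus ?thesis unfolding S_eq[abs_def] .
qed

lemma P_pos: "P t \<omega> > 0" unfolding P_def by simp
lemma Ex_nonneg: "0 \<le> Ex t \<omega>" unfolding Ex_def by simp
lemma S_nonneg: "0 \<le> S_proc M F \<rho> X \<epsilon> lam t \<omega>"
  unfolding S_eq using P_pos Ex_nonneg by (simp add: less_imp_le)

lemma Mvec_Suc: "Mvec X \<epsilon> (Suc n) \<omega> = Mvec X \<epsilon> n \<omega> + \<epsilon> (Suc n) \<omega> *\<^sub>R X (Suc n) \<omega>"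
  by (simp add: Mvec_def)

lemma P_step: "P (Suc n) \<omega> \<le> P n \<omega> * (1 + g2 (Suc n) \<omega> * ph (Suc n) \<omega>) + \<epsilon> (Suc n) \<omega> * Dn n \<omega>"
  using step_pointwise[OF rp lp, where xs="\<lambda>i. X i \<omega>" and n=n and u="Mvec X \<epsilon> n \<omega>" and e="\<epsilon> (Suc n) \<omega>"]
  unfolding P_def g2_def ph_def Dn_def Q_def Mvec_Suc by simp

lemma Es_Suc: "Es (Suc n) \<omega> = Es n \<omega> + e_term M F \<rho> X \<epsilon> lam (Suc n) \<omega>"
  by (simp add: Es_def)

lemma ex_step: "ennreal (Ex (Suc n) \<omega> * P n \<omega>) * (1 + e_term M F \<rho> X \<epsilon> lam (Suc n) \<omega>) \<le> ennreal (P n \<omega> * Ex n \<omega>)"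
proof (cases "Es (Suc n) \<omega> = \<infinity>")
  case True
  thus ?thesis by (simp add: Ex_def)
next
  case False
  let ?e = "e_term M F \<rho> X \<epsilon> lam (Suc n) \<omega>"
  have fin: "Es n \<omega> \<noteq> \<infinity>" "?e \<noteq> \<infinity>" using False unfolding Es_Suc by auto
  define a where "a = enn2real (Es n \<omega>)"
  define b where "b = enn2real ?e"
  have a0: "0 \<le> a" and b0: "0 \<le> b" by (simp_all add: a_def b_def)
  have ea: "Es n \<omega> = ennreal a" unfolding a_def using fin(1) by (simp add: less_top[symmetric])
  have eb: "?e = ennreal b" unfolding b_def using fin(2) by (simp add: less_top[symmetric])
  have es: "Es (Suc n) \<omega> = ennreal (a + b)" unfolding Es_Suc ea eb using a0 b0 by simp
  have x1: "Ex (Suc n) \<omega> = exp (- (a + b))"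
  proof -
    have "enn2real (Es (Suc n) \<omega>) = a + b" unfolding es using a0 b0 by (simp del: ennreal_plus)
    thus ?thesis using False by (simp add: Ex_def)
  qed
  have x0: "Ex n \<omega> = exp (- a)" unfolding Ex_def ea using a0 by simp
  have Pp: "0 < P n \<omega>" by (rule P_pos)
  have "ennreal (Ex (Suc n) \<omega> * P n \<omega>) * (1 + ?e) = ennreal (exp (- (a + b)) * P n \<omega> * (1 + b))"
    unfolding x1 eb using a0 b0 Pp by (simp add: ennreal_mult)
  also have "\<dots> \<le> ennreal (P n \<omega> * Ex n \<omega>)"
  proof (rule ennreal_leI)
    have "1 + b \<le> exp b" by (rule exp_ge_add_one_self[of b, simplified add.commute])
    hence "exp (- b) * (1 + b) \<le> 1" by (simp add: exp_minus field_simps)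
    hence k: "exp (- a) * (exp (- b) * (1 + b)) \<le> exp (- a) * 1" by (intro mult_left_mono) auto
    have ex: "exp (- (a + b)) = exp (- a) * exp (- b)" using exp_add[of "-a" "-b"] by simp
    have "exp (- (a + b)) * (1 + b) \<le> exp (- a)" using k unfolding ex by (simp add: mult.assoc)
    hence "exp (- (a + b)) * (1 + b) * P n \<omega> \<le> exp (- a) * P n \<omega>" using Pp by (intro mult_right_mono) auto
    thus "exp (- (a + b)) * P n \<omega> * (1 + b) \<le> P n \<omega> * Ex n \<omega>" unfolding x0 by (simp add: mult_ac)
  qed
  finally show ?thesis .
qed

lemma sinh_meas[measurable]: "sinh \<in> borel_measurable (borel :: real measure)"
  by (rule borel_measurable_continuous_onI) (intro continuous_intros)

lemma Dn_meas: "Dn n \<in> borel_measurable (F n)"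
proof -
  have [measurable]: "(\<lambda>\<omega>. Inv \<rho> (\<lambda>i. X i \<omega>) (Suc n) (Mvec X \<epsilon> n \<omega>)) \<in> borel_measurable (F n)"
    by (rule Inv_meas[OF _ Mvec_meas]) (auto intro: Xk)
  have [measurable]: "(\<lambda>\<omega>. Inv \<rho> (\<lambda>i. X i \<omega>) (Suc n) (X (Suc n) \<omega>)) \<in> borel_measurable (F n)"
    by (rule Inv_meas) (auto intro: Xk)
  have [measurable]: "Mvec X \<epsilon> n \<in> borel_measurable (F n)" by (rule Mvec_meas)
  show ?thesis unfolding Dn_def[abs_def] Dfun_def by measurable
qed

lemma g2_nonneg: "0 \<le> g2 t \<omega>"
  unfolding g2_def Q_def using Inv_pos[OF rp, of "X t \<omega>" "\<lambda>i. X i \<omega>" t] inner_commute by metis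

lemma ph_nonneg: "0 \<le> ph t \<omega>"
  unfolding ph_def using exp_ge_add_one_self[of "lam * \<bar>\<epsilon> t \<omega>\<bar>"] by linarith

lemma S_step: "AE \<omega> in M. nn_cond_exp M (F n) (\<lambda>\<omega>. ennreal (S_proc M F \<rho> X \<epsilon> lam (Suc n) \<omega>)) \<omega>
                 \<le> ennreal (S_proc M F \<rho> X \<epsilon> lam n \<omega>)"
proof -
  interpret sf: sigma_finite_subalgebra M "F n" by (rule sfs)
  let ?S = "S_proc M F \<rho> X \<epsilon> lam"
  let ?e = "\<epsilon> (Suc n)"
  let ?N = "nn_cond_exp M (F n)"
  have eM[measurable]: "?e \<in> borel_measurable M" using toM[OF em[of "Suc n"]] by simp
  have eint: "integrable M ?e" using ei by simp
  have ece: "AE \<omega> in M. real_cond_exp M (F n) ?e \<omega> = 0" using ce[of "Suc n"] by simp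
  have [measurable]: "Ex (Suc n) \<in> borel_measurable (F n)" by (rule Ex_meas) simp
  have [measurable]: "P n \<in> borel_measurable (F n)" by (rule P_meas)
  have [measurable]: "g2 (Suc n) \<in> borel_measurable (F n)" using g2_meas[of "Suc n"] by simp
  have [measurable]: "Dn n \<in> borel_measurable (F n)" by (rule Dn_meas)
  have [measurable]: "Ex (Suc n) \<in> borel_measurable M" by (rule toM[OF Ex_meas[of "Suc n" n]]) simp
  have [measurable]: "g2 (Suc n) \<in> borel_measurable M" using toM[OF g2_meas[of "Suc n"]] by simp
  have [measurable]: "P n \<in> borel_measurable M" "Dn n \<in> borel_measurable M" using toM P_meas Dn_meas by auto
  have [measurable]: "ph (Suc n) \<in> borel_measurable M" unfolding ph_def[abs_def] by measurable
  have SM[measurable]: "?S (Suc n) \<in> borel_measurable M" using toM[OF S_meas] .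
  define Z where "Z \<omega> = Ex (Suc n) \<omega> * (P n \<omega> * (1 + g2 (Suc n) \<omega> * ph (Suc n) \<omega>))" for \<omega>
  define h where "h \<omega> = Ex (Suc n) \<omega> * Dn n \<omega>" for \<omega>
  have Zm[measurable]: "Z \<in> borel_measurable M" unfolding Z_def[abs_def] by measurable
  have hm[measurable]: "h \<in> borel_measurable (F n)" unfolding h_def[abs_def] by measurable
  have bound: "?S (Suc n) \<omega> \<le> Z \<omega> + h \<omega> * ?e \<omega>" for \<omega>
  proof -
    have "?S (Suc n) \<omega> = Ex (Suc n) \<omega> * P (Suc n) \<omega>" by (simp add: S_eq mult.commute)
    also have "\<dots> \<le> Ex (Suc n) \<omega> * (P n \<omega> * (1 + g2 (Suc n) \<omega> * ph (Suc n) \<omega>) + ?e \<omega> * Dn n \<omega>)"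
      by (intro mult_left_mono P_step Ex_nonneg)
    also have "\<dots> = Z \<omega> + h \<omega> * ?e \<omega>" by (simp add: Z_def h_def algebra_simps)
    finally show ?thesis .
  qed
  have Z0: "0 \<le> Z \<omega>" for \<omega>
    unfolding Z_def using Ex_nonneg P_pos g2_nonneg ph_nonneg
    by (intro mult_nonneg_nonneg add_nonneg_nonneg) (auto intro: less_imp_le)
  have ZW: "0 \<le> Z \<omega> + h \<omega> * ?e \<omega>" for \<omega> using bound[of \<omega>] S_nonneg[of "Suc n" \<omega>] by linarith
  have i: "AE \<omega> in M. ?N (\<lambda>\<omega>. ennreal (?S (Suc n) \<omega>)) \<omega> \<le> ?N (\<lambda>\<omega>. ennreal (Z \<omega> + h \<omega> * ?e \<omega>)) \<omega>"
  proof -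
    have hM[measurable]: "h \<in> borel_measurable M" unfolding h_def[abs_def] by measurable
    have m1: "(\<lambda>\<omega>. ennreal (Z \<omega> + h \<omega> * ?e \<omega>)) \<in> borel_measurable M" by measurable
    have m2: "(\<lambda>\<omega>. ennreal (?S (Suc n) \<omega>)) \<in> borel_measurable M" by measurable
    show ?thesis by (rule sf.nn_cond_exp_mono) (use bound m1 m2 in \<open>auto intro: ennreal_leI\<close>)
  qed
  have ii: "AE \<omega> in M. ?N (\<lambda>\<omega>. ennreal (Z \<omega> + h \<omega> * ?e \<omega>)) \<omega> = ?N (\<lambda>\<omega>. ennreal (Z \<omega>)) \<omega>"
    by (rule sf.ce_cancel[OF Zm hm eint ece Z0 ZW])
  define EP where "EP \<omega> = Ex (Suc n) \<omega> * P n \<omega>" for \<omega>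
  define G where "G \<omega> = 1 + ennreal (g2 (Suc n) \<omega>) * ennreal (ph (Suc n) \<omega>)" for \<omega>
  have [measurable]: "EP \<in> borel_measurable (F n)" unfolding EP_def[abs_def] by measurable
  have [measurable]: "G \<in> borel_measurable M" unfolding G_def[abs_def] by measurable
  have ZG: "(\<lambda>\<omega>. ennreal (Z \<omega>)) = (\<lambda>\<omega>. ennreal (EP \<omega>) * G \<omega>)"
  proof
    fix \<omega>
    have e0: "0 \<le> EP \<omega>" unfolding EP_def using Ex_nonneg P_pos by (simp add: less_imp_le)
    have g0: "0 \<le> g2 (Suc n) \<omega> * ph (Suc n) \<omega>" using g2_nonneg ph_nonneg by simp
    have "ennreal (Z \<omega>) = ennreal (EP \<omega> * (1 + g2 (Suc n) \<omega> * ph (Suc n) \<omega>))"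
      by (simp add: Z_def EP_def mult.assoc)
    also have "\<dots> = ennreal (EP \<omega>) * (1 + ennreal (g2 (Suc n) \<omega>) * ennreal (ph (Suc n) \<omega>))"
      using e0 g0 g2_nonneg ph_nonneg by (simp add: ennreal_mult ennreal_plus)
    finally show "ennreal (Z \<omega>) = ennreal (EP \<omega>) * G \<omega>" by (simp add: G_def)
  qed
  have iii1: "AE \<omega> in M. ennreal (EP \<omega>) * ?N G \<omega> = ?N (\<lambda>\<omega>. ennreal (EP \<omega>) * G \<omega>) \<omega>"
    by (rule sf.nn_cond_exp_prod) measurable
  have iii2: "AE \<omega> in M. ?N (\<lambda>_. 1) \<omega> + ?N (\<lambda>\<omega>. ennreal (g2 (Suc n) \<omega>) * ennreal (ph (Suc n) \<omega>)) \<omega> = ?N G \<omega>"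
    unfolding G_def by (rule sf.nn_cond_exp_sum) measurable
  have iii3: "AE \<omega> in M. 1 = ?N (\<lambda>_. 1) \<omega>"
    by (rule sf.nn_cond_exp_F_meas) measurable
  have iii4: "AE \<omega> in M. ennreal (g2 (Suc n) \<omega>) * ?N (\<lambda>\<omega>. ennreal (ph (Suc n) \<omega>)) \<omega>
      = ?N (\<lambda>\<omega>. ennreal (g2 (Suc n) \<omega>) * ennreal (ph (Suc n) \<omega>)) \<omega>"
    by (rule sf.nn_cond_exp_prod) measurable
  have ee: "e_term M F \<rho> X \<epsilon> lam (Suc n) \<omega> = ennreal (g2 (Suc n) \<omega>) * ?N (\<lambda>\<omega>. ennreal (ph (Suc n) \<omega>)) \<omega>" for \<omega>
    using e_eq[of "Suc n" \<omega>] by simp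
  show ?thesis using i ii iii1 iii2 iii3 iii4
  proof eventually_elim
    case (elim \<omega>)
    have "?N (\<lambda>\<omega>. ennreal (?S (Suc n) \<omega>)) \<omega> \<le> ?N (\<lambda>\<omega>. ennreal (Z \<omega>)) \<omega>" using elim(1,2) by simp
    also have "\<dots> = ennreal (EP \<omega>) * ?N G \<omega>" unfolding ZG using elim(3) by simp
    also have "?N G \<omega> = 1 + e_term M F \<rho> X \<epsilon> lam (Suc n) \<omega>"
      unfolding ee using elim(4,5,6) by simp
    also have "ennreal (EP \<omega>) * (1 + e_term M F \<rho> X \<epsilon> lam (Suc n) \<omega>) \<le> ennreal (?S n \<omega>)"
      unfolding EP_def S_eq by (rule ex_step)
    finally show ?case .
  qed
qed

lemma S0: "S_proc M F \<rho> X \<epsilon> lam 0 \<omega> = 1"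
  by (simp add: S_eq P_def Q_def Mvec_def Ex_def Es_def)

lemma int_bound: "(\<integral>\<^sup>+\<omega>. ennreal (S_proc M F \<rho> X \<epsilon> lam t \<omega>) \<partial>M) \<le> 1"
proof (induction t)
  case 0
  have "(\<integral>\<^sup>+\<omega>. ennreal (S_proc M F \<rho> X \<epsilon> lam 0 \<omega>) \<partial>M) = (\<integral>\<^sup>+\<omega>. 1 \<partial>M)" by (simp add: S0)
  also have "\<dots> = 1" using prob_space.emeasure_space_1[OF ps] by simp
  finally show ?case by simp
next
  case (Suc n)
  interpret sf: sigma_finite_subalgebra M "F n" by (rule sfs)
  let ?S = "S_proc M F \<rho> X \<epsilon> lam"
  have SM[measurable]: "?S t \<in> borel_measurable M" for t using toM[OF S_meas] .
  have "(\<integral>\<^sup>+\<omega>. ennreal (?S (Suc n) \<omega>) \<partial>M) = (\<integral>\<^sup>+\<omega>. 1 * ennreal (?S (Suc n) \<omega>) \<partial>M)" by simp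
  also have "\<dots> = (\<integral>\<^sup>+\<omega>. 1 * nn_cond_exp M (F n) (\<lambda>\<omega>. ennreal (?S (Suc n) \<omega>)) \<omega> \<partial>M)"
    by (rule sf.nn_cond_exp_intg[symmetric]) measurable
  also have "\<dots> \<le> (\<integral>\<^sup>+\<omega>. ennreal (?S n \<omega>) \<partial>M)"
    using S_step[of n] by (intro nn_integral_mono_AE) auto
  also have "\<dots> \<le> 1" by (rule Suc.IH)
  finally show ?case .
qed

lemma S_int: "integrable M (S_proc M F \<rho> X \<epsilon> lam t)"
proof (rule integrableI_nonneg)
  show "S_proc M F \<rho> X \<epsilon> lam t \<in> borel_measurable M" using toM[OF S_meas] .
  show "AE x in M. 0 \<le> S_proc M F \<rho> X \<epsilon> lam t x" using S_nonneg by simp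
  show "(\<integral>\<^sup>+x. ennreal (S_proc M F \<rho> X \<epsilon> lam t x) \<partial>M) < \<infinity>"
    using int_bound[of t] by (simp add: le_less_trans)
qed

lemma N_chain: "AE \<omega> in M. nn_cond_exp M (F s) (\<lambda>\<omega>. ennreal (S_proc M F \<rho> X \<epsilon> lam (s + k) \<omega>)) \<omega>
    \<le> ennreal (S_proc M F \<rho> X \<epsilon> lam s \<omega>)"
proof (induction k)
  case 0
  interpret sf: sigma_finite_subalgebra M "F s" by (rule sfs)
  have [measurable]: "S_proc M F \<rho> X \<epsilon> lam s \<in> borel_measurable (F s)" by (rule S_meas)
  have "AE \<omega> in M. ennreal (S_proc M F \<rho> X \<epsilon> lam s \<omega>) = nn_cond_exp M (F s) (\<lambda>\<omega>. ennreal (S_proc M F \<rho> X \<epsilon> lam s \<omega>)) \<omega>"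
    by (rule sf.nn_cond_exp_F_meas) measurable
  thus ?case by auto
next
  case (Suc k)
  interpret sf: sigma_finite_subalgebra M "F s" by (rule sfs)
  let ?S = "S_proc M F \<rho> X \<epsilon> lam"
  let ?f = "\<lambda>\<omega>. ennreal (?S (Suc (s + k)) \<omega>)"
  have SM[measurable]: "?S t \<in> borel_measurable M" for t using toM[OF S_meas] .
  have n1: "AE \<omega> in M. nn_cond_exp M (F s) ?f \<omega> = nn_cond_exp M (F s) (nn_cond_exp M (F (s + k)) ?f) \<omega>"
    by (rule sf.nn_cond_exp_nested_subalg[OF sub subFF]) auto
  have n2: "AE \<omega> in M. nn_cond_exp M (F s) (nn_cond_exp M (F (s + k)) ?f) \<omega> \<le> nn_cond_exp M (F s) (\<lambda>\<omega>. ennreal (?S (s + k) \<omega>)) \<omega>"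
    by (rule sf.nn_cond_exp_mono[OF S_step]) auto
  show ?case using n1 n2 Suc.IH by eventually_elim simp
qed

lemma super: "s \<le> t \<Longrightarrow> AE \<omega> in M. real_cond_exp M (F s) (S_proc M F \<rho> X \<epsilon> lam t) \<omega> \<le> S_proc M F \<rho> X \<epsilon> lam s \<omega>"
proof -
  assume "s \<le> t"
  then obtain k where t: "t = s + k" using le_Suc_ex by blast
  show ?thesis using N_chain[of s k]
  proof eventually_elim
    case (elim \<omega>)
    have "real_cond_exp M (F s) (S_proc M F \<rho> X \<epsilon> lam t) \<omega>
        \<le> enn2real (nn_cond_exp M (F s) (\<lambda>\<omega>. ennreal (S_proc M F \<rho> X \<epsilon> lam t \<omega>)) \<omega>)"
      unfolding real_cond_exp_def by simp
    also have "\<dots> \<le> S_proc M F \<rho> X \<epsilon> lam s \<omega>"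
      using elim S_nonneg unfolding t by (intro enn2real_leI) auto
    finally show ?case .
  qed
qed

end

theorem theorem1:
  fixes M :: "'a measure" and F :: "nat \<Rightarrow> 'a measure"
    and X :: "nat \<Rightarrow> 'a \<Rightarrow> 'h::{real_inner, complete_space, second_countable_topology}"
    and \<epsilon> :: "nat \<Rightarrow> 'a \<Rightarrow> real" and \<rho> lam :: real
  assumes "prob_space M"
    and "is_filtration M F"
    and "\<And>t. t \<ge> 1 \<Longrightarrow> X t \<in> borel_measurable (F (t - 1))"
    and "\<And>t. t \<ge> 1 \<Longrightarrow> \<epsilon> t \<in> borel_measurable (F t)"
    and "\<And>t. t \<ge> 1 \<Longrightarrow> integrable M (\<epsilon> t)"
    and "\<And>t. t \<ge> 1 \<Longrightarrow> AE \<omega> in M. real_cond_exp M (F (t - 1)) (\<epsilon> t) \<omega> = 0"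
    and "\<rho> > 0" and "lam > 0"
  shows "supermartingale M F (S_proc M F \<rho> X \<epsilon> lam)
         \<and> (\<forall>t \<omega>. 0 \<le> S_proc M F \<rho> X \<epsilon> lam t \<omega>)"
proof -
  interpret mainctx M F X \<epsilon> \<rho> lam
    by (intro mainctx.intro) (use assms in auto)
  show ?thesis unfolding supermartingale_def using S_meas S_int super S_nonneg by blast
qed

end
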